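(* Let $p$ be an odd prime, $S$ a finite $p$-group and $\mathcal{F}$ a saturated fusion system on $S$. Let $E_1$ and $E_2$ be distinct $\mathcal{F}$-essential subgroups of $S$ with $N_S(E_1)=N_S(E_2)$, and set $T=\mathrm{core}_{\mathcal{F}}(E_1,E_2)$. Suppose that: (1) $E_1$, $E_2$ and $T$ have rank at most $3$; (2) $O^{p'}(\mathrm{Out}_{\mathcal{F}}(E_1))\cong\mathrm{SL}_2(p)$ and it centralizes $T$; (3) there exists a subgroup $V$ with $T\le V\le E_1$ that is $\mathcal{F}$-characteristic in $E_1$, has sectional rank at most $3$, is contained in $C_{E_1}(T)T$, and is such that $V/T$ is a natural $\mathrm{SL}_2(p)$-module for $O^{p'}(\mathrm{Out}_{\mathcal{F}}(E_1))$. Then $T$ is abelian, $T\le Z(V)$, $|[V,V]|\le p$, and $T/[V,V]$ is cyclic.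
   Context: Rank: minimal size of a generating set; sectional rank at most $k$ means all subgroups have rank at most $k$. For $P\le S$, $\mathrm{Aut}_{\mathcal{F}}(P)=\mathrm{Hom}_{\mathcal{F}}(P,P)$, $\mathrm{Out}_{\mathcal{F}}(P)=\mathrm{Aut}_{\mathcal{F}}(P)/\mathrm{Inn}(P)$, $P^{\mathcal{F}}=\{P\alpha:\alpha\in\mathrm{Hom}_{\mathcal{F}}(P,S)\}$. $E\le S$ is $\mathcal{F}$-essential if $C_S(P)\le P$ and $|N_S(E)|\ge|N_S(P)|$ for all $P\in E^{\mathcal{F}}$, and $\mathrm{Out}_{\mathcal{F}}(E)$ has a strongly $p$-embedded subgroup. For $Q\le P$, $Q$ is $\mathcal{F}$-characteristic in $P$ if normalized by $\mathrm{Aut}_{\mathcal{F}}(P)$. For $\mathcal{F}$-essential $E_1,E_2$ with $N_S(E_1)=N_S(E_2)$, $\mathrm{core}_{\mathcal{F}}(E_1,E_2)$ is the largest subgroup of $E_1\cap E_2$ normalized by $\mathrm{Aut}_{\mathcal{F}}(E_1)$, $\mathrm{Aut}_{\mathcal{F}}(E_2)$ and $\mathrm{Aut}_{\mathcal{F}}(N_S(E_1))$. $O^{p'}(G)$ is the subgroup generated by the $p$-elements of $G$. A natural $\mathrm{SL}_2(p)$-module is the $2$-dimensional $\mathbb{F}_p$-module of $\mathrm{SL}_2(p)$ acting by matrix multiplication. *)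

theory Defs
  imports "HOL-Algebra.Algebra"
begin

definition conjmap :: "('a,'b) monoid_scheme \<Rightarrow> 'a \<Rightarrow> 'a set \<Rightarrow> 'a \<Rightarrow> 'a" where
  "conjmap S g P = (\<lambda>x\<in>P. inv\<^bsub>S\<^esub> g \<otimes>\<^bsub>S\<^esub> x \<otimes>\<^bsub>S\<^esub> g)"

definition inj_homs :: "('a,'b) monoid_scheme \<Rightarrow> 'a set \<Rightarrow> 'a set \<Rightarrow> ('a \<Rightarrow> 'a) set" where
  "inj_homs S P Q = {\<phi>. \<phi> \<in> extensional P \<and> \<phi> ` P \<subseteq> Q \<and> inj_on \<phi> P \<and>
      (\<forall>x\<in>P. \<forall>y\<in>P. \<phi> (x \<otimes>\<^bsub>S\<^esub> y) = \<phi> x \<otimes>\<^bsub>S\<^esub> \<phi> y)}"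

definition HomS :: "('a,'b) monoid_scheme \<Rightarrow> 'a set \<Rightarrow> 'a set \<Rightarrow> ('a \<Rightarrow> 'a) set" where
  "HomS S P Q = {conjmap S g P | g. g \<in> carrier S \<and> conjmap S g P ` P \<subseteq> Q}"

text \<open>A fusion system: F P Q = Hom_F(P,Q) for subgroups P, Q of S.\<close>
definition fusion_system ::
  "('a,'b) monoid_scheme \<Rightarrow> ('a set \<Rightarrow> 'a set \<Rightarrow> ('a \<Rightarrow> 'a) set) \<Rightarrow> bool" where
  "fusion_system S F \<longleftrightarrow>
     (\<forall>P Q. F P Q \<noteq> {} \<longrightarrow> subgroup P S \<and> subgroup Q S) \<and>
     (\<forall>P Q. subgroup P S \<and> subgroup Q S \<longrightarrow> HomS S P Q \<subseteq> F P Q \<and> F P Q \<subseteq> inj_homs S P Q) \<and>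
     (\<forall>P Q \<phi>. \<phi> \<in> F P Q \<longrightarrow> \<phi> \<in> F P (\<phi> ` P) \<and> restrict (inv_into P \<phi>) (\<phi> ` P) \<in> F (\<phi> ` P) P) \<and>
     (\<forall>P Q R \<phi> \<psi>. \<phi> \<in> F P Q \<and> \<psi> \<in> F Q R \<longrightarrow> restrict (\<psi> \<circ> \<phi>) P \<in> F P R)"

definition normalizerS :: "('a,'b) monoid_scheme \<Rightarrow> 'a set \<Rightarrow> 'a set" where
  "normalizerS S P = {g \<in> carrier S. (\<lambda>x. inv\<^bsub>S\<^esub> g \<otimes>\<^bsub>S\<^esub> x \<otimes>\<^bsub>S\<^esub> g) ` P = P}"

definition centralizerS :: "('a,'b) monoid_scheme \<Rightarrow> 'a set \<Rightarrow> 'a set \<Rightarrow> 'a set" where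
  "centralizerS S H P = {g \<in> H. \<forall>x\<in>P. g \<otimes>\<^bsub>S\<^esub> x = x \<otimes>\<^bsub>S\<^esub> g}"

definition Fconj :: "('a,'b) monoid_scheme \<Rightarrow> ('a set \<Rightarrow> 'a set \<Rightarrow> ('a \<Rightarrow> 'a) set) \<Rightarrow> 'a set \<Rightarrow> 'a set set" where
  "Fconj S F P = {\<alpha> ` P | \<alpha>. \<alpha> \<in> F P (carrier S)}"

definition fully_normalized where
  "fully_normalized S F P \<longleftrightarrow> (\<forall>Q\<in>Fconj S F P. card (normalizerS S Q) \<le> card (normalizerS S P))"

definition fully_centralized where
  "fully_centralized S F P \<longleftrightarrow>
     (\<forall>Q\<in>Fconj S F P. card (centralizerS S (carrier S) Q) \<le> card (centralizerS S (carrier S) P))"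

text \<open>Aut_S(P) is a Sylow p-subgroup of Aut_F(P): a p-subgroup of index prime to p.\<close>
definition fully_automized where
  "fully_automized (p::nat) S F P \<longleftrightarrow>
     (\<exists>n. card (HomS S P P) = p ^ n) \<and> \<not> p dvd (card (F P P) div card (HomS S P P))"

text \<open>N_\<phi> = {g \<in> N_S(Q) : \<phi> c_g \<phi>^-1 \<in> Aut_S(P)} for an F-isomorphism \<phi> : Q \<rightarrow> P.\<close>
definition N_phi where
  "N_phi S Q P \<phi> = {g \<in> normalizerS S Q.
      (\<lambda>x\<in>P. \<phi> (conjmap S g Q (inv_into Q \<phi> x))) \<in> HomS S P P}"

definition receptive where
  "receptive S F P \<longleftrightarrow>
     (\<forall>Q \<phi>. \<phi> \<in> F Q P \<and> \<phi> ` Q = P \<longrightarrow>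
        (\<exists>\<psi> \<in> F (N_phi S Q P \<phi>) (carrier S). \<forall>x\<in>Q. \<psi> x = \<phi> x))"

definition saturated_fusion_system where
  "saturated_fusion_system p S F \<longleftrightarrow> fusion_system S F \<and>
     (\<forall>P. subgroup P S \<longrightarrow>
        (fully_normalized S F P \<longrightarrow> fully_centralized S F P \<and> fully_automized p S F P) \<and>
        (fully_centralized S F P \<longrightarrow> receptive S F P))"

definition AutF :: "('a,'b) monoid_scheme \<Rightarrow> ('a set \<Rightarrow> 'a set \<Rightarrow> ('a \<Rightarrow> 'a) set) \<Rightarrow> 'a set \<Rightarrow> ('a \<Rightarrow> 'a) monoid" where
  "AutF S F P = \<lparr>carrier = F P P, monoid.mult = (\<lambda>\<alpha> \<beta>. restrict (\<alpha> \<circ> \<beta>) P), one = restrict id P\<rparr>"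

definition Inn :: "('a,'b) monoid_scheme \<Rightarrow> 'a set \<Rightarrow> ('a \<Rightarrow> 'a) set" where
  "Inn S P = {conjmap S g P | g. g \<in> P}"

definition OutF where
  "OutF S F P = AutF S F P Mod Inn S P"

definition strongly_p_embedded :: "nat \<Rightarrow> ('c,'d) monoid_scheme \<Rightarrow> 'c set \<Rightarrow> bool" where
  "strongly_p_embedded p G H \<longleftrightarrow> subgroup H G \<and> H \<noteq> carrier G \<and> p dvd card H \<and>
     (\<forall>x \<in> carrier G - H. \<not> p dvd card (H \<inter> (x <#\<^bsub>G\<^esub> H #>\<^bsub>G\<^esub> inv\<^bsub>G\<^esub> x)))"

definition essential where
  "essential p S F E \<longleftrightarrow> subgroup E S \<and>
     (\<forall>P\<in>Fconj S F E. centralizerS S (carrier S) P \<subseteq> P \<and>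
                       card (normalizerS S P) \<le> card (normalizerS S E)) \<and>
     (\<exists>H. strongly_p_embedded p (OutF S F E) H)"

definition F_characteristic where
  "F_characteristic F E Q \<longleftrightarrow> (\<forall>\<alpha> \<in> F E E. \<alpha> ` Q = Q)"

definition core_cond where
  "core_cond S F E1 E2 U \<longleftrightarrow> subgroup U S \<and> U \<subseteq> E1 \<inter> E2 \<and>
     F_characteristic F E1 U \<and> F_characteristic F E2 U \<and> F_characteristic F (normalizerS S E1) U"

definition is_core where
  "is_core S F E1 E2 T \<longleftrightarrow> core_cond S F E1 E2 T \<and> (\<forall>U. core_cond S F E1 E2 U \<longrightarrow> U \<subseteq> T)"

definition Opprime :: "nat \<Rightarrow> ('c,'d) monoid_scheme \<Rightarrow> 'c set" where
  "Opprime p G = generate G {x \<in> carrier G. \<exists>n. group.ord G x = p ^ n}"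

definition rank :: "('a,'b) monoid_scheme \<Rightarrow> 'a set \<Rightarrow> nat" where
  "rank S H = (LEAST n. \<exists>Y. Y \<subseteq> H \<and> finite Y \<and> card Y = n \<and> generate S Y = H)"

definition sectional_rank_le where
  "sectional_rank_le S V k \<longleftrightarrow> (\<forall>H. subgroup H S \<and> H \<subseteq> V \<longrightarrow> rank S H \<le> k)"

text \<open>SL_2(p) as 2x2 matrices over Z/p, entries in {0..p-1}, (a,b,c,d) = [[a,b],[c,d]].\<close>
definition SL2 :: "nat \<Rightarrow> (int \<times> int \<times> int \<times> int) monoid" where
  "SL2 p = \<lparr>carrier = {(a,b,c,d). a \<in> {0..<int p} \<and> b \<in> {0..<int p} \<and> c \<in> {0..<int p} \<and>
                         d \<in> {0..<int p} \<and> (a * d - b * c) mod int p = 1},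
            monoid.mult = (\<lambda>(a,b,c,d) (e,f,g,h).
               ((a*e + b*g) mod int p, (a*f + b*h) mod int p,
                (c*e + d*g) mod int p, (c*f + d*h) mod int p)),
            one = (1,0,0,1)\<rparr>"

definition matvec :: "nat \<Rightarrow> int \<times> int \<times> int \<times> int \<Rightarrow> int \<times> int \<Rightarrow> int \<times> int" where
  "matvec p M v = (case M of (a,b,c,d) \<Rightarrow> case v of (x,y) \<Rightarrow>
      ((a*x + b*y) mod int p, (c*x + d*y) mod int p))"

text \<open>V/T is a natural SL_2(p)-module for the subgroup K of Out_F(E) (a group G of cosets
  of Inn(E)): there are an isomorphism \<psi> : K \<cong> SL_2(p) and a surjective homomorphism
  \<theta> : V \<rightarrow> F_p^2 with kernel T (i.e. V/T \<cong> F_p^2) such that for X \<in> K, \<alpha> \<in> X, v \<in> V: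
  \<theta>(v\<alpha>) = \<psi>(X) \<theta>(v).\<close>
definition natural_SL2_module where
  "natural_SL2_module p S G K V T \<longleftrightarrow>
     (\<exists>\<psi> \<theta>. \<psi> \<in> iso (G\<lparr>carrier := K\<rparr>) (SL2 p) \<and>
        \<theta> ` V = {0..<int p} \<times> {0..<int p} \<and>
        (\<forall>v\<in>V. \<forall>w\<in>V. \<theta> (v \<otimes>\<^bsub>S\<^esub> w) = ((fst (\<theta> v) + fst (\<theta> w)) mod int p,
                                         (snd (\<theta> v) + snd (\<theta> w)) mod int p)) \<and>
        (\<forall>v\<in>V. \<theta> v = (0,0) \<longleftrightarrow> v \<in> T) \<and>
        (\<forall>C\<in>K. \<forall>\<alpha>\<in>C. \<forall>v\<in>V. \<theta> (\<alpha> v) = matvec p (\<psi> C) (\<theta> v)))"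

text \<open>A subgroup K of Out_F(E) centralizes T: every coset in K has a representative
  acting trivially on T.\<close>
definition Out_centralizes where
  "Out_centralizes K T \<longleftrightarrow> (\<forall>C\<in>K. \<exists>\<alpha>\<in>C. \<forall>t\<in>T. \<alpha> t = t)"

end

theory Submission
  imports Defs
begin


definition modhom :: "nat \<Rightarrow> ('a,'b) monoid_scheme \<Rightarrow> 'a set \<Rightarrow> ('a \<Rightarrow> int) \<Rightarrow> bool" where
  "modhom p G H l \<longleftrightarrow> (\<forall>x\<in>H. 0 \<le> l x \<and> l x < int p) \<and>
     (\<forall>x\<in>H. \<forall>y\<in>H. l (x \<otimes>\<^bsub>G\<^esub> y) = (l x + l y) mod int p)"

lemma modhomD:
  assumes "modhom p G H l"
  shows "\<And>x. x \<in> H \<Longrightarrow> 0 \<le> l x" "\<And>x. x \<in> H \<Longrightarrow> l x < int p"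
    "\<And>x y. x \<in> H \<Longrightarrow> y \<in> H \<Longrightarrow> l (x \<otimes>\<^bsub>G\<^esub> y) = (l x + l y) mod int p"
  using assms unfolding modhom_def by auto

context group begin

lemma modhom_one:
  assumes "modhom p G H l" "subgroup H G"
  shows "l \<one> = 0"
proof -
  have "\<one> \<in> H" using assms(2) subgroup.one_closed by blast
  have a: "0 \<le> l \<one>" "l \<one> < int p" using modhomD(1,2)[OF assms(1) \<open>\<one> \<in> H\<close>] by auto
  have "l (\<one> \<otimes> \<one>) = (l \<one> + l \<one>) mod int p" using modhomD(3)[OF assms(1) \<open>\<one> \<in> H\<close> \<open>\<one> \<in> H\<close>] .
  hence a3: "l \<one> = (l \<one> + l \<one>) mod int p" by simp
  show ?thesis
  proof (cases "l \<one> + l \<one> < int p")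
    case True thus ?thesis using a a3 by simp
  next
    case False
    have "(l \<one> + l \<one>) mod int p = (l \<one> + l \<one> - int p + int p) mod int p" by simp
    also have "\<dots> = (l \<one> + l \<one> - int p) mod int p" by (rule mod_add_self2)
    also have "\<dots> = l \<one> + l \<one> - int p" using a False by (intro mod_pos_pos_trivial) auto
    finally have "(l \<one> + l \<one>) mod int p = l \<one> + l \<one> - int p" .
    thus ?thesis using a a3 by linarith
  qed
qed

lemma modhom_inv:
  assumes "modhom p G H l" "subgroup H G" "x \<in> H"
  shows "l (inv x) = (- l x) mod int p"
proof -
  have xi: "inv x \<in> H" using subgroup.m_inv_closed[OF assms(2) assms(3)] .
  have xc: "x \<in> carrier G" using subgroup.mem_carrier[OF assms(2,3)] .
  have "0 = l (x \<otimes> inv x)" using modhom_one[OF assms(1,2)] r_inv[OF xc] by simp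
  also have "\<dots> = (l x + l (inv x)) mod int p" using modhomD(3)[OF assms(1) assms(3) xi] .
  finally have "(l x + l (inv x)) mod int p = 0" by simp
  note s = this
  have "0 \<le> l (inv x)" "l (inv x) < int p" using modhomD[OF assms(1)] xi by auto
  have "(- l x) mod int p = ((l x + l (inv x)) mod int p - l x) mod int p"
    using \<open>(l x + l (inv x)) mod int p = 0\<close> by simp
  also have "\<dots> = ((l x + l (inv x)) - l x) mod int p" by (rule mod_diff_left_eq)
  also have "\<dots> = l (inv x) mod int p" by simp
  also have "\<dots> = l (inv x)" using \<open>0 \<le> l (inv x)\<close> \<open>l (inv x) < int p\<close> by (rule mod_pos_pos_trivial)
  finally show ?thesis by simp
qed

lemma modhom_pow:
  assumes "modhom p G H l" "subgroup H G" "x \<in> H"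
  shows "l (x [^] (k::nat)) = (int k * l x) mod int p"
proof (induction k)
  case 0 thus ?case using modhom_one[OF assms(1,2)] by simp
next
  case (Suc k)
  have xc: "x \<in> carrier G" using subgroup.mem_carrier[OF assms(2,3)] .
  have xk: "x [^] k \<in> H" using subgroup_int_pow_closed[OF assms(2,3), of "int k"] by (simp add: int_pow_int)
  have "l (x [^] Suc k) = l (x [^] k \<otimes> x)" using xc by (simp add: nat_pow_Suc)
  also have "\<dots> = (l (x [^] k) + l x) mod int p" using modhomD(3)[OF assms(1) xk assms(3)] .
  also have "\<dots> = ((int k * l x) mod int p + l x) mod int p" using Suc by simp
  also have "\<dots> = (int k * l x + l x) mod int p" by (simp add: mod_add_left_eq)
  also have "\<dots> = (int (Suc k) * l x) mod int p" by (simp add: algebra_simps)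
  finally show ?case .
qed

lemma modhom_gen:
  assumes L: "\<And>l. l \<in> L \<Longrightarrow> modhom p G H l" and sg: "subgroup H G"
    and Y: "Y \<subseteq> H" "finite Y" and gen: "generate G Y \<subseteq> H"
    and x: "x \<in> generate G Y"
  shows "\<exists>c. \<forall>l\<in>L. l x = (\<Sum>y\<in>Y. c y * l y) mod int p"
  using x
proof (induction rule: generate.induct)
  case one
  show ?case by (rule exI[of _ "\<lambda>_. 0"]) (simp add: modhom_one[OF L sg])
next
  case (incl h)
  show ?case
  proof (rule exI[of _ "\<lambda>y. if y = h then 1 else 0"], intro ballI)
    fix l assume l: "l \<in> L"
    have "(\<Sum>y\<in>Y. (if y = h then 1 else 0) * l y) = (\<Sum>y\<in>Y. if y = h then l y else 0)"
      by (intro sum.cong) auto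
    also have "\<dots> = l h" using sum.delta[OF Y(2), of h l] incl by simp
    finally have "(\<Sum>y\<in>Y. (if y = h then 1 else 0) * l y) = l h" .
    moreover have "0 \<le> l h" "l h < int p" using modhomD[OF L[OF l]] incl Y by auto
    ultimately show "l h = (\<Sum>y\<in>Y. (if y = h then 1 else 0) * l y) mod int p" by simp
  qed
next
  case (inv h)
  show ?case
  proof (rule exI[of _ "\<lambda>y. if y = h then -1 else 0"], intro ballI)
    fix l assume l: "l \<in> L"
    have "(\<Sum>y\<in>Y. (if y = h then -1 else 0) * l y) = (\<Sum>y\<in>Y. if y = h then - l y else 0)"
      by (intro sum.cong) auto
    also have "\<dots> = - l h" using sum.delta[OF Y(2), of h "\<lambda>y. - l y"] inv by simp
    finally have "(\<Sum>y\<in>Y. (if y = h then -1 else 0) * l y) = - l h" .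
    moreover have "l (inv h) = (- l h) mod int p" using modhom_inv[OF L[OF l] sg] inv Y by auto
    ultimately show "l (inv h) = (\<Sum>y\<in>Y. (if y = h then -1 else 0) * l y) mod int p" by simp
  qed
next
  case (eng h1 h2)
  then obtain c1 c2 where c1: "\<forall>l\<in>L. l h1 = (\<Sum>y\<in>Y. c1 y * l y) mod int p"
    and c2: "\<forall>l\<in>L. l h2 = (\<Sum>y\<in>Y. c2 y * l y) mod int p" by blast
  show ?case
  proof (rule exI[of _ "\<lambda>y. c1 y + c2 y"], intro ballI)
    fix l assume l: "l \<in> L"
    have "h1 \<in> H" "h2 \<in> H" using eng gen by auto
    hence "l (h1 \<otimes> h2) = (l h1 + l h2) mod int p" using modhomD(3)[OF L[OF l]] by blast
    also have "\<dots> = ((\<Sum>y\<in>Y. c1 y * l y) + (\<Sum>y\<in>Y. c2 y * l y)) mod int p"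
      using c1[rule_format, OF l] c2[rule_format, OF l] by (simp add: mod_add_eq)
    also have "\<dots> = (\<Sum>y\<in>Y. (c1 y + c2 y) * l y) mod int p"
      by (simp add: sum.distrib distrib_right)
    finally show "l (h1 \<otimes> h2) = (\<Sum>y\<in>Y. (c1 y + c2 y) * l y) mod int p" .
  qed
qed

end

lemma sum_mod_coeff:
  "(\<Sum>y\<in>Y. (c y mod m) * l y) mod (m::int) = (\<Sum>y\<in>Y. c y * l y) mod m"
proof -
  have e: "(c y mod m) * l y mod m = c y * l y mod m" for y by (rule mod_mult_left_eq)
  have "(\<Sum>y\<in>Y. (c y mod m) * l y) mod m = (\<Sum>y\<in>Y. ((c y mod m) * l y) mod m) mod m"
    by (rule mod_sum_eq[symmetric])
  also have "\<dots> = (\<Sum>y\<in>Y. (c y * l y) mod m) mod m" by (simp only: e)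
  also have "\<dots> = (\<Sum>y\<in>Y. c y * l y) mod m" by (rule mod_sum_eq)
  finally show ?thesis .
qed


lemma rank_ge4:
  assumes grp: "group G" and sg: "subgroup V G" and fin: "finite V" and p2: "2 \<le> p"
    and h1: "modhom p G V l1" and h2: "modhom p G V l2" and h3: "modhom p G V l3" and h4: "modhom p G V l4"
    and surj: "\<And>a b c d. a \<in> {0..<int p} \<Longrightarrow> b \<in> {0..<int p} \<Longrightarrow> c \<in> {0..<int p} \<Longrightarrow> d \<in> {0..<int p}
         \<Longrightarrow> \<exists>v\<in>V. l1 v = a \<and> l2 v = b \<and> l3 v = c \<and> l4 v = d"
  shows "4 \<le> rank G V"
proof -
  interpret group G by (rule grp)
  have genV: "generate G V = V"
    using generate_subgroup_incl[OF subset_refl sg] generate.incl[of _ V G] by blast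
  have ex: "\<exists>n Y. Y \<subseteq> V \<and> finite Y \<and> card Y = n \<and> generate G Y = V"
    using genV fin by blast
  obtain Y where Y: "Y \<subseteq> V" "finite Y" "card Y = rank G V" "generate G Y = V"
    using LeastI_ex[OF ex] unfolding rank_def by blast
  let ?L = "{l1, l2, l3, l4}"
  have L: "\<And>l. l \<in> ?L \<Longrightarrow> modhom p G V l" using h1 h2 h3 h4 by blast
  define g where "g = (\<lambda>c. ((\<Sum>y\<in>Y. c y * l1 y) mod int p, (\<Sum>y\<in>Y. c y * l2 y) mod int p,
                             (\<Sum>y\<in>Y. c y * l3 y) mod int p, (\<Sum>y\<in>Y. c y * l4 y) mod int p))"
  let ?A = "{0..<int p} \<times> {0..<int p} \<times> {0..<int p} \<times> {0..<int p}"
  have sub: "?A \<subseteq> g ` (Y \<rightarrow>\<^sub>E {0..<int p})"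
  proof
    fix z assume z: "z \<in> ?A"
    then obtain a b c d where zz: "z = (a, b, c, d)" "a \<in> {0..<int p}" "b \<in> {0..<int p}"
      "c \<in> {0..<int p}" "d \<in> {0..<int p}" by auto
    then obtain v where v: "v \<in> V" "l1 v = a" "l2 v = b" "l3 v = c" "l4 v = d"
      using surj by blast
    obtain e where e: "\<forall>l\<in>?L. l v = (\<Sum>y\<in>Y. e y * l y) mod int p"
      using modhom_gen[OF L sg Y(1,2)] Y(4) v(1) by blast
    define e' where "e' = restrict (\<lambda>y. e y mod int p) Y"
    have e'P: "e' \<in> Y \<rightarrow>\<^sub>E {0..<int p}" unfolding e'_def using p2 by auto
    have "\<And>l. (\<Sum>y\<in>Y. e' y * l y) mod int p = (\<Sum>y\<in>Y. e y * l y) mod int p"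
    proof -
      fix l :: "'a \<Rightarrow> int"
      have "(\<Sum>y\<in>Y. e' y * l y) = (\<Sum>y\<in>Y. (e y mod int p) * l y)"
        unfolding e'_def by (intro sum.cong) auto
      thus "(\<Sum>y\<in>Y. e' y * l y) mod int p = (\<Sum>y\<in>Y. e y * l y) mod int p"
        using sum_mod_coeff by simp
    qed
    hence "g e' = z" unfolding g_def using e v zz(1) by simp
    thus "z \<in> g ` (Y \<rightarrow>\<^sub>E {0..<int p})" using e'P by blast
  qed
  have c1: "card ?A = p ^ 4" by (simp add: card_cartesian_product power4_eq_xxxx)
  have "p ^ 4 \<le> card (g ` (Y \<rightarrow>\<^sub>E {0..<int p}))"
    using card_mono[OF finite_imageI[OF finite_PiE[OF Y(2)]] sub] c1 by simp
  also have "\<dots> \<le> card (Y \<rightarrow>\<^sub>E {0..<int p})" by (rule card_image_le) (simp add: finite_PiE Y(2))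
  also have "\<dots> = p ^ card Y" using Y(2) by (simp add: card_PiE)
  finally have "p ^ 4 \<le> p ^ card Y" .
  hence "4 \<le> card Y" using p2 by (simp add: power_le_imp_le_exp)
  thus ?thesis using Y(3) by simp
qed


context group begin

lemma card_subgroup_ppow:
  assumes fin: "finite (carrier G)" and ordG: "order G = p ^ n" and pr: "Factorial_Ring.prime p"
    and M: "subgroup M G"
  shows "\<exists>a\<le>n. card M = p ^ a"
proof -
  have "card (rcosets M) * card M = order G" using lagrange[OF M] .
  hence "card M dvd p ^ n" using ordG by (metis dvd_triv_right)
  thus ?thesis using divides_primepow_nat[OF pr] by blast
qed

lemma pgroup_normalizer_grows:
  assumes fin: "finite (carrier G)" and ordG: "order G = p ^ n" and pr: "Factorial_Ring.prime p"
    and M: "subgroup M G" and ne: "M \<noteq> carrier G"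
  shows "\<exists>x\<in>carrier G. x \<notin> M \<and> (\<forall>m\<in>M. x \<otimes> m \<otimes> inv x \<in> M)"
proof (rule ccontr)
  assume nC: "\<not> ?thesis"
  let ?R = "rcosets M"
  let ?H = "G\<lparr>carrier := M\<rparr>"
  define \<phi> where "\<phi> = (\<lambda>m. \<lambda>C\<in>?R. C #> inv m)"
  have Msub: "M \<subseteq> carrier G" using M subgroup.subset by blast
  have MH: "group ?H" using subgroup_imp_group[OF M] .
  have Rmem: "C #> g \<in> ?R" if CR: "C \<in> ?R" and gc: "g \<in> carrier G" for C g
  proof -
    obtain a where a: "a \<in> carrier G" "C = M #> a" using CR unfolding RCOSETS_def by blast
    have "C #> g = M #> (a \<otimes> g)" using coset_mult_assoc[OF Msub a(1) gc] a(2) by simp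
    thus ?thesis using rcosetsI[OF Msub m_closed[OF a(1) gc]] by simp
  qed
  have Rsub: "C \<subseteq> carrier G" if "C \<in> ?R" for C
    using subgroup.rcosets_carrier[OF M is_group that] .
  have act: "\<phi> m C = C #> inv m" if "C \<in> ?R" for m C using that unfolding \<phi>_def by simp
  have bij: "\<phi> m \<in> Bij ?R" if "m \<in> M" for m
  proof -
    have mc: "m \<in> carrier G" using Msub that by blast
    have "bij_betw (\<lambda>C. C #> inv m) ?R ?R"
    proof (rule bij_betwI[where g = "\<lambda>C. C #> m"])
      show "(\<lambda>C. C #> inv m) \<in> ?R \<rightarrow> ?R" using Rmem mc by auto
      show "(\<lambda>C. C #> m) \<in> ?R \<rightarrow> ?R" using Rmem mc by auto
      show "C #> inv m #> m = C" if "C \<in> ?R" for C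
        using coset_mult_assoc[OF Rsub[OF that] inv_closed[OF mc] mc] mc Rsub[OF that] by simp
      show "C #> m #> inv m = C" if "C \<in> ?R" for C
        using coset_mult_assoc[OF Rsub[OF that] mc inv_closed[OF mc]] mc Rsub[OF that] by simp
    qed
    hence "bij_betw (\<phi> m) ?R ?R" by (rule bij_betw_cong[THEN iffD1, rotated]) (simp add: act)
    thus ?thesis unfolding Bij_def \<phi>_def by simp
  qed
  have ga: "group_action ?H ?R \<phi>"
    unfolding group_action_def group_hom_def group_hom_axioms_def
  proof (intro conjI)
    show "group ?H" by (rule MH)
    show "group (BijGroup ?R)" by (rule group_BijGroup)
    show "\<phi> \<in> hom ?H (BijGroup ?R)"
    proof (rule homI)
      show "\<phi> x \<in> carrier (BijGroup ?R)" if "x \<in> carrier ?H" for x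
        using bij that unfolding BijGroup_def by simp
      show "\<phi> (x \<otimes>\<^bsub>?H\<^esub> y) = \<phi> x \<otimes>\<^bsub>BijGroup ?R\<^esub> \<phi> y"
        if "x \<in> carrier ?H" "y \<in> carrier ?H" for x y
      proof -
        have xc: "x \<in> carrier G" "y \<in> carrier G" using that Msub by auto
        have "\<phi> x \<otimes>\<^bsub>BijGroup ?R\<^esub> \<phi> y = compose ?R (\<phi> x) (\<phi> y)"
          using bij that unfolding BijGroup_def by simp
        also have "\<dots> = \<phi> (x \<otimes> y)"
        proof (rule ext)
          fix C show "compose ?R (\<phi> x) (\<phi> y) C = \<phi> (x \<otimes> y) C"
          proof (cases "C \<in> ?R")
            case True
            have "compose ?R (\<phi> x) (\<phi> y) C = C #> inv y #> inv x"
              using True Rmem[OF True inv_closed[OF xc(2)]] by (simp add: compose_def act)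
            also have "\<dots> = C #> inv (x \<otimes> y)"
              using coset_mult_assoc[OF Rsub[OF True]] xc by (simp add: inv_mult_group)
            finally show ?thesis using True act by simp
          next
            case False thus ?thesis unfolding compose_def \<phi>_def by simp
          qed
        qed
        finally show ?thesis by simp
      qed
    qed
  qed
  interpret A: group_action ?H ?R \<phi> by (rule ga)
  have finR: "finite ?R" unfolding RCOSETS_def using fin by simp
  have MR: "M \<in> ?R" using rcosetsI[OF Msub one_closed] Msub by simp
  have orbM: "orbit ?H \<phi> M = {M}"
  proof -
    have "\<phi> m M = M" if "m \<in> M" for m
      using act[OF MR] subgroup.rcos_const[OF M is_group subgroup.m_inv_closed[OF M that]] by simp
    thus ?thesis unfolding orbit_def using subgroup.one_closed[OF M] by force
  qed
  have cardM: "\<exists>a\<le>n. card M = p ^ a" by (rule card_subgroup_ppow[OF fin ordG pr M])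
  then obtain a where a: "a \<le> n" "card M = p ^ a" by blast
  have orbdvd: "p dvd card (orbit ?H \<phi> C)" if C: "C \<in> ?R" "C \<noteq> M" for C
  proof -
    have "card (orbit ?H \<phi> C) * card (stabilizer ?H \<phi> C) = order ?H"
      by (rule A.orbit_stabilizer_theorem[OF C(1)])
    hence "card (orbit ?H \<phi> C) dvd p ^ a" using a(2) unfolding order_def by (simp add: dvd_triv_left[of "card (orbit ?H \<phi> C)", where b="card (stabilizer ?H \<phi> C)", unfolded mult.commute[of _ "card (stabilizer ?H \<phi> C)"]] ) (metis dvd_triv_left)
    then obtain b where b: "card (orbit ?H \<phi> C) = p ^ b" using divides_primepow_nat[OF pr] by blast
    have "b \<noteq> 0"
    proof
      assume "b = 0"
      hence c1: "card (orbit ?H \<phi> C) = 1" using b by simp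
      have "C \<in> orbit ?H \<phi> C" by (rule A.orbit_refl[OF C(1)])
      hence orbC: "orbit ?H \<phi> C = {C}" using c1 by (metis card_1_singletonE singletonD)
      obtain x where x: "x \<in> carrier G" "C = M #> x" using C(1) unfolding RCOSETS_def by blast
      have xM: "x \<notin> M" using x C(2) subgroup.rcos_const[OF M is_group] by blast
      have "x \<otimes> m \<otimes> inv x \<in> M" if m: "m \<in> M" for m
      proof -
        have im: "inv m \<in> M" using subgroup.m_inv_closed[OF M m] .
        have mc: "m \<in> carrier G" using m Msub by blast
        have "\<phi> (inv m) C \<in> orbit ?H \<phi> C" unfolding orbit_def using im by auto
        hence "\<phi> (inv m) C = C" using orbC by blast
        hence "M #> x #> m = M #> x" using act[OF C(1)] x(2) mc by simp
        hence "M #> (x \<otimes> m) = M #> x" using coset_mult_assoc[OF Msub x(1) mc] by simp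
        hence "x \<otimes> m \<in> M #> x" using repr_independenceD[OF M m_closed[OF x(1) mc], of x] by simp
        thus ?thesis using subgroup.rcos_module_imp[OF M is_group x(1)] by simp
      qed
      thus False using nC x(1) xM by blast
    qed
    thus ?thesis using b by simp
  qed
  have sumeq: "card ?R = (\<Sum>Ob\<in>orbits ?H ?R \<phi>. card Ob)"
    using A.disjoint_sum[OF finR, of "\<lambda>_. 1::nat"] by simp
  have orbM_in: "{M} \<in> orbits ?H ?R \<phi>" using orbM MR unfolding orbits_def by blast
  have finO: "finite (orbits ?H ?R \<phi>)" unfolding orbits_def using finR by simp
  have "(\<Sum>Ob\<in>orbits ?H ?R \<phi>. card Ob) = card {M} + (\<Sum>Ob\<in>orbits ?H ?R \<phi> - {{M}}. card Ob)"
    using sum.remove[OF finO orbM_in, of card] by simp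
  moreover have "p dvd (\<Sum>Ob\<in>orbits ?H ?R \<phi> - {{M}}. card Ob)"
  proof (rule dvd_sum)
    fix Ob assume Ob: "Ob \<in> orbits ?H ?R \<phi> - {{M}}"
    then obtain C where C: "C \<in> ?R" "Ob = orbit ?H \<phi> C" unfolding orbits_def by blast
    have "C \<noteq> M" using C Ob orbM by auto
    thus "p dvd card Ob" using orbdvd C by simp
  qed
  moreover have "p dvd card ?R"
  proof -
    have "card ?R * p ^ a = p ^ n" using lagrange[OF M] a(2) ordG by simp
    moreover have "a \<noteq> n"
    proof
      assume "a = n"
      hence "card M = card (carrier G)" using a(2) ordG unfolding order_def by simp
      hence "M = carrier G" using card_subset_eq[OF fin Msub] by simp
      thus False using ne by simp
    qed
    moreover have "p ^ n = p ^ (n - a) * p ^ a" using a(1) by (simp add: power_add[symmetric])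
    moreover have "p > 0" using pr prime_gt_0_nat by simp
    ultimately have "card ?R = p ^ (n - a)" by auto
    thus ?thesis using \<open>a \<le> n\<close> \<open>a \<noteq> n\<close> by simp
  qed
  ultimately have "p dvd (\<Sum>Ob\<in>orbits ?H ?R \<phi> - {{M}}. card Ob) + 1"
    "p dvd (\<Sum>Ob\<in>orbits ?H ?R \<phi> - {{M}}. card Ob)" using sumeq by simp_all
  hence "p dvd 1" using dvd_add_right_iff by blast
  thus False using pr by simp
qed

end


context group begin

lemma cancel_l1 [simp]: "x \<in> carrier G \<Longrightarrow> y \<in> carrier G \<Longrightarrow> inv x \<otimes> (x \<otimes> y) = y"
  by (simp add: m_assoc[symmetric])
lemma cancel_l2 [simp]: "x \<in> carrier G \<Longrightarrow> y \<in> carrier G \<Longrightarrow> x \<otimes> (inv x \<otimes> y) = y"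
  by (simp add: m_assoc[symmetric])

lemma pow_coprime_mem:
  assumes fin: "finite (carrier G)" and ordG: "order G = p ^ n" and pr: "Factorial_Ring.prime p"
    and M: "subgroup M G" and x: "x \<in> carrier G" and xd: "x [^] (d::int) \<in> M" and nd: "\<not> int p dvd d"
  shows "x \<in> M"
proof -
  have cop: "coprime d (int (p ^ n))"
  proof -
    have "Factorial_Ring.prime (int p)" using pr prime_nat_int_transfer by blast
    hence "coprime (int p) d" using nd prime_imp_coprime_int by blast
    hence "coprime d (int p)" by (simp add: coprime_commute)
    thus ?thesis by (simp add: of_nat_power)
  qed
  obtain u v where uv: "u * d + v * int (p ^ n) = 1"
    using bezout_int[of d "int (p ^ n)"] cop by (metis coprime_iff_gcd_eq_1)
  have one0: "x [^] (p ^ n) = \<one>" using pow_order_eq_1[OF x] ordG by simp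
  have one: "x [^] int (p ^ n) = \<one>" by (simp only: int_pow_int one0)
  have "x = x [^] (u * d + v * int (p ^ n))" using uv x by simp
  also have "\<dots> = x [^] (d * u) \<otimes> x [^] (int (p ^ n) * v)" using x by (simp add: int_pow_mult mult.commute)
  also have "\<dots> = (x [^] d) [^] u \<otimes> (x [^] int (p ^ n)) [^] v" using x by (simp add: int_pow_pow)
  also have "\<dots> = (x [^] d) [^] u" using one x by simp
  finally have eq: "x = (x [^] d) [^] u" .
  show ?thesis by (subst eq) (rule subgroup_int_pow_closed[OF M xd])
qed

lemma normalizes_both:
  assumes fin: "finite (carrier G)" and M: "subgroup M G" and x: "x \<in> carrier G"
    and nx: "\<forall>m\<in>M. x \<otimes> m \<otimes> inv x \<in> M"
  shows "\<forall>m\<in>M. inv x \<otimes> m \<otimes> x \<in> M"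
proof -
  have Msub: "M \<subseteq> carrier G" using subgroup.subset[OF M] .
  let ?f = "\<lambda>m. x \<otimes> m \<otimes> inv x"
  have "inj_on ?f M"
  proof (rule inj_onI)
    fix a b assume ab: "a \<in> M" "b \<in> M" "?f a = ?f b"
    have ac: "a \<in> carrier G" "b \<in> carrier G" using ab Msub by auto
    hence "x \<otimes> a = x \<otimes> b" using ab(3) x by simp
    hence "inv x \<otimes> (x \<otimes> a) = inv x \<otimes> (x \<otimes> b)" by simp
    thus "a = b" using ac x by (simp add: m_assoc[symmetric])
  qed
  moreover have "?f ` M \<subseteq> M" using nx by auto
  moreover have "finite M" using fin Msub finite_subset by blast
  ultimately have surj: "?f ` M = M" using endo_inj_surj by blast
  show ?thesis
  proof
    fix m assume m: "m \<in> M"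
    have "m \<in> ?f ` M" using surj m by simp
    then obtain m' where m': "m' \<in> M" "m = x \<otimes> m' \<otimes> inv x" by blast
    have mc': "m' \<in> carrier G" using m' Msub by auto
    have "inv x \<otimes> m \<otimes> x = (inv x \<otimes> x) \<otimes> m' \<otimes> (inv x \<otimes> x)" using m'(2) mc' x by (simp add: m_assoc)
    hence "inv x \<otimes> m \<otimes> x = m'" using mc' x by simp
    thus "inv x \<otimes> m \<otimes> x \<in> M" using m' by simp
  qed
qed

lemma conj_int_pow:
  assumes M: "subgroup M G" and x: "x \<in> carrier G"
    and n1: "\<forall>m\<in>M. x \<otimes> m \<otimes> inv x \<in> M" and n2: "\<forall>m\<in>M. inv x \<otimes> m \<otimes> x \<in> M"
  shows "\<forall>m\<in>M. x [^] (i::int) \<otimes> m \<otimes> inv (x [^] i) \<in> M"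
proof -
  have Msub: "M \<subseteq> carrier G" using subgroup.subset[OF M] .
  have pos: "\<forall>m\<in>M. x [^] (k::nat) \<otimes> m \<otimes> inv (x [^] k) \<in> M" for k
  proof (induction k)
    case 0 thus ?case using Msub by auto
  next
    case (Suc k)
    show ?case
    proof
      fix m assume m: "m \<in> M"
      have mc: "m \<in> carrier G" using m Msub by auto
      have "x [^] Suc k \<otimes> m \<otimes> inv (x [^] Suc k) = x [^] k \<otimes> (x \<otimes> m \<otimes> inv x) \<otimes> inv (x [^] k)"
        using x mc by (simp add: nat_pow_Suc2 inv_mult_group m_assoc)
      thus "x [^] Suc k \<otimes> m \<otimes> inv (x [^] Suc k) \<in> M" using Suc n1 m by simp
    qed
  qed
  have neg: "\<forall>m\<in>M. inv x [^] (k::nat) \<otimes> m \<otimes> inv (inv x [^] k) \<in> M" for k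
  proof (induction k)
    case 0 thus ?case using Msub by auto
  next
    case (Suc k)
    show ?case
    proof
      fix m assume m: "m \<in> M"
      have mc: "m \<in> carrier G" using m Msub by auto
      have "inv x [^] Suc k \<otimes> m \<otimes> inv (inv x [^] Suc k) = inv x [^] k \<otimes> (inv x \<otimes> m \<otimes> x) \<otimes> inv (inv x [^] k)"
        using x mc by (simp add: nat_pow_Suc2 inv_mult_group m_assoc)
      thus "inv x [^] Suc k \<otimes> m \<otimes> inv (inv x [^] Suc k) \<in> M" using Suc n2 m by simp
    qed
  qed
  show ?thesis
  proof (cases "i \<ge> 0")
    case True
    define k where "k = nat i"
    have "i = int k" using True k_def by simp
    thus ?thesis using pos[of k] by (simp add: int_pow_int)
  next
    case False
    define k where "k = nat (- i)"
    have k: "i = - int k" using False k_def by simp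
    have "x [^] i = inv x [^] k" using x k by (simp add: int_pow_neg_int nat_pow_inv)
    thus ?thesis using neg[of k] by simp
  qed
qed

definition (in group) powprod :: "'a \<Rightarrow> 'a set \<Rightarrow> 'a set" where
  "powprod y M = {y [^] (i::int) \<otimes> m | i m. m \<in> M}"

lemma powprod_subgroup:
  assumes M: "subgroup M G" and y: "y \<in> carrier G"
    and cj: "\<forall>i::int. \<forall>m\<in>M. y [^] i \<otimes> m \<otimes> inv (y [^] i) \<in> M"
  shows "subgroup (powprod y M) G" "M \<subseteq> powprod y M" "y \<in> powprod y M"
proof -
  have Msub: "M \<subseteq> carrier G" using subgroup.subset[OF M] .
  have one: "\<one> \<in> M" using subgroup.one_closed[OF M] .
  show "M \<subseteq> powprod y M" unfolding powprod_def
  proof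
    fix m assume "m \<in> M" thus "m \<in> {y [^] (i::int) \<otimes> m | i m. m \<in> M}"
      using Msub y by (intro CollectI exI[of _ 0] exI[of _ m]) auto
  qed
  show "y \<in> powprod y M" unfolding powprod_def
    using one y by (intro CollectI exI[of _ 1] exI[of _ \<one>]) auto
  show "subgroup (powprod y M) G"
  proof (rule subgroupI)
    show "powprod y M \<subseteq> carrier G" unfolding powprod_def using y Msub by auto
    show "powprod y M \<noteq> {}" using \<open>M \<subseteq> powprod y M\<close> one by auto
  next
    fix a assume "a \<in> powprod y M"
    then obtain i m where im: "m \<in> M" "a = y [^] (i::int) \<otimes> m" unfolding powprod_def by blast
    have mc: "m \<in> carrier G" using im Msub by auto
    have "inv a = inv m \<otimes> inv (y [^] i)" using im mc y by (simp add: inv_mult_group)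
    also have "\<dots> = y [^] (-i) \<otimes> (y [^] i \<otimes> inv m \<otimes> inv (y [^] i))"
      using mc y by (simp add: int_pow_neg m_assoc[symmetric])
    finally have "inv a = y [^] (-i) \<otimes> (y [^] i \<otimes> inv m \<otimes> inv (y [^] i))" .
    moreover have "y [^] i \<otimes> inv m \<otimes> inv (y [^] i) \<in> M"
      using cj subgroup.m_inv_closed[OF M im(1)] by blast
    ultimately show "inv a \<in> powprod y M" unfolding powprod_def by blast
  next
    fix a b assume "a \<in> powprod y M" "b \<in> powprod y M"
    then obtain i m j m' where im: "m \<in> M" "a = y [^] (i::int) \<otimes> m"
      and jm: "m' \<in> M" "b = y [^] (j::int) \<otimes> m'" unfolding powprod_def by blast
    have mc: "m \<in> carrier G" "m' \<in> carrier G" using im jm Msub by auto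
    have yj: "y [^] j \<in> carrier G" "y [^] i \<in> carrier G" using y by auto
    have e1: "y [^] j \<otimes> (inv (y [^] j) \<otimes> m \<otimes> y [^] j) = m \<otimes> y [^] j"
      using yj mc by (simp add: m_assoc[symmetric])
    have "y [^] (i + j) \<otimes> ((inv (y [^] j) \<otimes> m \<otimes> y [^] j) \<otimes> m') = y [^] i \<otimes> (y [^] j \<otimes> (inv (y [^] j) \<otimes> m \<otimes> y [^] j)) \<otimes> m'"
      using yj mc y by (simp add: int_pow_mult m_assoc)
    also have "\<dots> = a \<otimes> b" using e1 im jm yj mc by (simp add: m_assoc)
    finally have "a \<otimes> b = y [^] (i + j) \<otimes> ((inv (y [^] j) \<otimes> m \<otimes> y [^] j) \<otimes> m')" by simp
    moreover have "inv (y [^] j) \<otimes> m \<otimes> y [^] j \<in> M"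
    proof -
      have "y [^] (-j) \<otimes> m \<otimes> inv (y [^] (-j)) \<in> M" using cj im(1) by blast
      thus ?thesis using y by (simp add: int_pow_neg)
    qed
    hence "(inv (y [^] j) \<otimes> m \<otimes> y [^] j) \<otimes> m' \<in> M" using subgroup.m_closed[OF M _ jm(1)] by blast
    ultimately show "a \<otimes> b \<in> powprod y M" unfolding powprod_def by blast
  qed
qed

end


context group begin

lemma powprod_mult_rep:
  assumes "y \<in> carrier G" "m \<in> carrier G" "m' \<in> carrier G"
  shows "(y [^] (i::int) \<otimes> m) \<otimes> (y [^] (j::int) \<otimes> m') = y [^] (i + j) \<otimes> ((inv (y [^] j) \<otimes> m \<otimes> y [^] j) \<otimes> m')"
  using assms by (simp add: int_pow_mult m_assoc)

lemma pgroup_hom_Zp: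
  assumes fin: "finite (carrier G)" and ordG: "order G = p ^ n" and pr: "Factorial_Ring.prime p"
    and H: "subgroup H G" and ne: "H \<noteq> carrier G"
  shows "\<exists>k. modhom p G (carrier G) k \<and> (\<forall>h\<in>H. k h = 0) \<and> (\<exists>x\<in>carrier G. k x = 1)"
proof -
  have p2: "2 \<le> p" using pr prime_ge_2_nat by blast
  define Sg where "Sg = {M. subgroup M G \<and> H \<subseteq> M \<and> M \<noteq> carrier G}"
  have finSg: "finite Sg"
    by (rule finite_subset[of Sg "Pow (carrier G)"]) (auto simp: Sg_def fin dest: subgroup.subset)
  have HSg: "H \<in> Sg" unfolding Sg_def using H ne by blast
  define c where "c = Max (card ` Sg)"
  have "c \<in> card ` Sg" unfolding c_def using finSg HSg by (intro Max_in) auto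
  then obtain M where MSg: "M \<in> Sg" and cM: "card M = c" by blast
  have cmax: "card M' \<le> card M" if "M' \<in> Sg" for M'
    unfolding cM c_def using finSg that by (intro Max_ge) auto
  have M: "subgroup M G" "H \<subseteq> M" "M \<noteq> carrier G" using MSg unfolding Sg_def by auto
  have Msub: "M \<subseteq> carrier G" using subgroup.subset[OF M(1)] .
  have maxl: "M' = M" if M': "subgroup M' G" "M \<subseteq> M'" "M' \<noteq> carrier G" for M'
  proof -
    have "M' \<in> Sg" unfolding Sg_def using M' M(2) by blast
    hence "card M' \<le> card M" by (rule cmax)
    moreover have "finite M'" using fin subgroup.subset[OF M'(1)] finite_subset by blast
    moreover have "card M \<le> card M'" using card_mono[OF \<open>finite M'\<close> M'(2)] .
    ultimately have "card M = card M'" by simp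
    from card_subset_eq[OF \<open>finite M'\<close> M'(2) this] show ?thesis by simp
  qed
  obtain x where x: "x \<in> carrier G" "x \<notin> M" and nx: "\<forall>m\<in>M. x \<otimes> m \<otimes> inv x \<in> M"
    using pgroup_normalizer_grows[OF fin ordG pr M(1) M(3)] by blast
  have nx2: "\<forall>m\<in>M. inv x \<otimes> m \<otimes> x \<in> M" using normalizes_both[OF fin M(1) x(1) nx] .
  have cj: "\<forall>i::int. \<forall>m\<in>M. x [^] i \<otimes> m \<otimes> inv (x [^] i) \<in> M"
    using conj_int_pow[OF M(1) x(1) nx nx2] by blast
  note PP = powprod_subgroup[OF M(1) x(1) cj]
  have Pfull: "powprod x M = carrier G"
  proof (rule ccontr)
    assume "powprod x M \<noteq> carrier G"
    hence "powprod x M = M" using maxl[OF PP(1) PP(2)] by blast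
    thus False using PP(3) x(2) by simp
  qed
  define y where "y = x [^] (int p)"
  have y: "y \<in> carrier G" unfolding y_def using x by simp
  have cjy: "\<forall>i::int. \<forall>m\<in>M. y [^] i \<otimes> m \<otimes> inv (y [^] i) \<in> M"
    using cj x unfolding y_def by (simp add: int_pow_pow)
  note PY = powprod_subgroup[OF M(1) y cjy]
  have yM: "y \<in> M"
  proof (cases "powprod y M = carrier G")
    case False
    hence "powprod y M = M" using maxl[OF PY(1) PY(2)] by blast
    thus ?thesis using PY(3) by simp
  next
    case True
    hence "x \<in> powprod y M" using x by simp
    then obtain i m where im: "m \<in> M" "x = y [^] (i::int) \<otimes> m" unfolding powprod_def by blast
    have mc: "m \<in> carrier G" using im Msub by auto
    have "m = inv (y [^] i) \<otimes> x" using im mc y by simp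
    also have "\<dots> = x [^] (- (int p * i)) \<otimes> x [^] (1::int)" using x unfolding y_def by (simp add: int_pow_pow int_pow_neg)
    also have "\<dots> = x [^] (- (int p * i) + 1)" using int_pow_mult[OF x(1), of "- (int p * i)" 1] by simp
    also have "- (int p * i) + 1 = 1 - int p * i" by simp
    finally have "x [^] (1 - int p * i) \<in> M" using im by simp
    moreover have "\<not> int p dvd (1 - int p * i)"
    proof
      assume "int p dvd (1 - int p * i)"
      hence "int p dvd (1 - int p * i) + int p * i" by (intro dvd_add) auto
      hence "int p dvd 1" by simp
      thus False using p2 by simp
    qed
    ultimately have "x \<in> M" using pow_coprime_mem[OF fin ordG pr M(1) x(1)] by blast
    thus ?thesis using x(2) by simp
  qed
  have rep: "\<exists>i m. m \<in> M \<and> z = x [^] (i::int) \<otimes> m" if "z \<in> carrier G" for z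
    using that Pfull unfolding powprod_def by blast
  have uniq: "int p dvd (i - j)" if "m \<in> M" "m' \<in> M" "x [^] (i::int) \<otimes> m = x [^] (j::int) \<otimes> m'" for i j m m'
  proof (rule ccontr)
    assume nd: "\<not> int p dvd (i - j)"
    have mc: "m \<in> carrier G" "m' \<in> carrier G" using that Msub by auto
    have "x [^] (i - j) = x [^] (-j + i)" by simp
    also have "\<dots> = inv (x [^] j) \<otimes> x [^] i" using x by (simp only: int_pow_mult int_pow_neg)
    also have "\<dots> = m' \<otimes> inv m"
    proof -
      have "inv (x [^] j) \<otimes> (x [^] i \<otimes> m) \<otimes> inv m = inv (x [^] j) \<otimes> (x [^] j \<otimes> m') \<otimes> inv m"
        using that(3) by simp
      thus ?thesis using x mc by (simp add: m_assoc)
    qed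
    finally have "x [^] (i - j) \<in> M" using that subgroup.m_closed[OF M(1)] subgroup.m_inv_closed[OF M(1)] by simp
    hence "x \<in> M" using pow_coprime_mem[OF fin ordG pr M(1) x(1)] nd by blast
    thus False using x(2) by simp
  qed
  define k where "k = (\<lambda>z. (SOME i::int. \<exists>m\<in>M. z = x [^] i \<otimes> m) mod int p)"
  have kval: "k z = i mod int p" if "m \<in> M" "z = x [^] (i::int) \<otimes> m" for z i m
  proof -
    have "\<exists>i. \<exists>m\<in>M. z = x [^] (i::int) \<otimes> m" using that by blast
    hence "\<exists>m\<in>M. z = x [^] (SOME i::int. \<exists>m\<in>M. z = x [^] i \<otimes> m) \<otimes> m" by (rule someI_ex)
    then obtain m0 where m0: "m0 \<in> M" "z = x [^] (SOME i::int. \<exists>m\<in>M. z = x [^] i \<otimes> m) \<otimes> m0" by blast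
    have "int p dvd ((SOME i::int. \<exists>m\<in>M. z = x [^] i \<otimes> m) - i)" using uniq[OF m0(1) that(1)] m0(2) that(2) by simp
    thus ?thesis unfolding k_def by (simp add: mod_eq_dvd_iff)
  qed
  have kmod: "modhom p G (carrier G) k"
    unfolding modhom_def
  proof (intro conjI ballI)
    fix z assume "z \<in> carrier G"
    show "0 \<le> k z" "k z < int p" unfolding k_def using p2 by auto
  next
    fix z w assume zw: "z \<in> carrier G" "w \<in> carrier G"
    obtain i m where im: "m \<in> M" "z = x [^] (i::int) \<otimes> m" using rep[OF zw(1)] by blast
    obtain j m' where jm: "m' \<in> M" "w = x [^] (j::int) \<otimes> m'" using rep[OF zw(2)] by blast
    have mc: "m \<in> carrier G" "m' \<in> carrier G" using im jm Msub by auto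
    have "z \<otimes> w = x [^] (i + j) \<otimes> ((inv (x [^] j) \<otimes> m \<otimes> x [^] j) \<otimes> m')"
      using powprod_mult_rep[OF x(1) mc] im jm by simp
    moreover have "(inv (x [^] j) \<otimes> m \<otimes> x [^] j) \<otimes> m' \<in> M"
    proof -
      have "x [^] (-j) \<otimes> m \<otimes> inv (x [^] (-j)) \<in> M" using cj im(1) by blast
      hence "inv (x [^] j) \<otimes> m \<otimes> x [^] j \<in> M" using x by (simp add: int_pow_neg)
      thus ?thesis using subgroup.m_closed[OF M(1) _ jm(1)] by blast
    qed
    ultimately have "k (z \<otimes> w) = (i + j) mod int p" using kval by blast
    moreover have "k z = i mod int p" "k w = j mod int p" using kval im jm by blast+
    ultimately show "k (z \<otimes> w) = (k z + k w) mod int p" by (simp add: mod_add_eq)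
  qed
  have "\<forall>h\<in>H. k h = 0"
  proof
    fix h assume h: "h \<in> H"
    hence "h \<in> M" using M(2) by blast
    moreover have "h = x [^] (0::int) \<otimes> h" using \<open>h \<in> M\<close> Msub by auto
    ultimately show "k h = 0" using kval[of h h 0] by simp
  qed
  moreover have "k x = 1"
  proof -
    have "x = x [^] (1::int) \<otimes> \<one>" using x by simp
    hence "k x = 1 mod int p" using kval subgroup.one_closed[OF M(1)] by blast
    thus ?thesis using p2 by simp
  qed
  ultimately show ?thesis using kmod x(1) by blast
qed

lemma pgroup_two_homs:
  assumes fin: "finite (carrier G)" and ordG: "order G = p ^ n" and pr: "Factorial_Ring.prime p"
    and N: "subgroup N G" and nc: "\<forall>g\<in>carrier G. generate G (insert g N) \<noteq> carrier G"
  shows "\<exists>k1 k2 a b. modhom p G (carrier G) k1 \<and> modhom p G (carrier G) k2 \<and>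
     (\<forall>h\<in>N. k1 h = 0 \<and> k2 h = 0) \<and> a \<in> carrier G \<and> b \<in> carrier G \<and>
     k1 a = 1 \<and> k2 a = 0 \<and> k2 b = 1"
proof -
  have Nsub: "N \<subseteq> carrier G" using subgroup.subset[OF N] .
  have Nne: "N \<noteq> carrier G"
  proof
    assume NC: "N = carrier G"
    have "generate G (insert \<one> N) \<subseteq> carrier G" using generate_incl Nsub by auto
    moreover have "carrier G \<subseteq> generate G (insert \<one> N)" using NC generate.incl[of _ "insert \<one> N" G] by blast
    ultimately show False using nc by blast
  qed
  obtain k1 a where k1: "modhom p G (carrier G) k1" "\<forall>h\<in>N. k1 h = 0" "a \<in> carrier G" "k1 a = 1"
    using pgroup_hom_Zp[OF fin ordG pr N Nne] by blast
  let ?H2 = "generate G (insert a N)"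
  have H2: "subgroup ?H2 G" using generate_is_subgroup Nsub k1(3) by auto
  have H2ne: "?H2 \<noteq> carrier G" using nc k1(3) by blast
  obtain k2 b where k2: "modhom p G (carrier G) k2" "\<forall>h\<in>?H2. k2 h = 0" "b \<in> carrier G" "k2 b = 1"
    using pgroup_hom_Zp[OF fin ordG pr H2 H2ne] by blast
  have "insert a N \<subseteq> ?H2" using generate.incl[of _ "insert a N" G] by blast
  hence "\<forall>h\<in>N. k2 h = 0" "k2 a = 0" using k2(2) by auto
  thus ?thesis using k1 k2 by blast
qed

end


locale fsE =
  fixes S :: "('a,'b) monoid_scheme" (structure) and F :: "'a set \<Rightarrow> 'a set \<Rightarrow> ('a \<Rightarrow> 'a) set" and E :: "'a set"
  assumes grp: "group S" and fs: "fusion_system S F" and E: "subgroup E S" and fin: "finite (carrier S)"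
begin

lemma Esub: "E \<subseteq> carrier S" using subgroup.subset[OF E] .
lemma finE: "finite E" using fin Esub finite_subset by blast

lemma inj: "\<alpha> \<in> F E E \<Longrightarrow> \<alpha> \<in> inj_homs S E E"
  using fs E unfolding fusion_system_def by blast

lemma Fprops:
  assumes "\<alpha> \<in> F E E"
  shows "\<alpha> \<in> extensional E" "\<alpha> ` E \<subseteq> E" "inj_on \<alpha> E"
    "\<And>x y. x \<in> E \<Longrightarrow> y \<in> E \<Longrightarrow> \<alpha> (x \<otimes>\<^bsub>S\<^esub> y) = \<alpha> x \<otimes>\<^bsub>S\<^esub> \<alpha> y"
  using inj[OF assms] unfolding inj_homs_def by auto

lemma Fsurj: "\<alpha> \<in> F E E \<Longrightarrow> \<alpha> ` E = E"
  using Fprops[of \<alpha>] finE endo_inj_surj by blast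

lemma Fone: assumes "\<alpha> \<in> F E E" shows "\<alpha> \<one>\<^bsub>S\<^esub> = \<one>\<^bsub>S\<^esub>"
proof -
  interpret group S by (rule grp)
  have o: "\<one> \<in> E" using subgroup.one_closed[OF E] .
  have a: "\<alpha> \<one> \<in> E" using Fprops(2)[OF assms] o by blast
  have "\<alpha> \<one> = \<alpha> \<one> \<otimes> \<alpha> \<one>" using Fprops(4)[OF assms o o] by simp
  thus ?thesis using a Esub by (metis l_cancel_one' subsetD)
qed

lemma Finv: assumes "\<alpha> \<in> F E E" "g \<in> E" shows "\<alpha> (inv\<^bsub>S\<^esub> g) = inv\<^bsub>S\<^esub> (\<alpha> g)"
proof -
  interpret group S by (rule grp)
  have gi: "inv g \<in> E" using subgroup.m_inv_closed[OF E assms(2)] .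
  have "\<alpha> (inv g) \<otimes> \<alpha> g = \<one>" using Fprops(4)[OF assms(1) gi assms(2)] Fone[OF assms(1)] assms(2) Esub by auto
  moreover have "\<alpha> g \<in> carrier S" "\<alpha> (inv g) \<in> carrier S" using Fprops(2)[OF assms(1)] gi assms(2) Esub by auto
  ultimately show ?thesis using inv_equality by simp
qed

lemma comp: "\<alpha> \<in> F E E \<Longrightarrow> \<beta> \<in> F E E \<Longrightarrow> restrict (\<alpha> \<circ> \<beta>) E \<in> F E E"
  using fs unfolding fusion_system_def by blast

lemma conjF: assumes "g \<in> E" shows "conjmap S g E \<in> F E E"
proof -
  interpret group S by (rule grp)
  have gc: "g \<in> carrier S" using assms Esub by auto
  have "conjmap S g E ` E \<subseteq> E" unfolding conjmap_def
    using assms subgroup.m_closed[OF E] subgroup.m_inv_closed[OF E] by auto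
  hence "conjmap S g E \<in> HomS S E E" unfolding HomS_def using gc by blast
  thus ?thesis using fs E unfolding fusion_system_def by blast
qed

lemma conj_one: "conjmap S \<one> E = restrict id E"
proof -
  interpret group S by (rule grp)
  show ?thesis unfolding conjmap_def using Esub by (intro ext) auto
qed

lemma idF: "restrict id E \<in> F E E"
  using conjF[OF subgroup.one_closed[OF E]] conj_one by simp

lemma invF: assumes "\<alpha> \<in> F E E" shows "restrict (inv_into E \<alpha>) E \<in> F E E"
  using fs assms Fsurj[OF assms] unfolding fusion_system_def by metis

lemma AutF_simps: "carrier (AutF S F E) = F E E" "\<one>\<^bsub>AutF S F E\<^esub> = restrict id E"
  "a \<otimes>\<^bsub>AutF S F E\<^esub> b = restrict (a \<circ> b) E"
  unfolding AutF_def by simp_all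

lemma AutF_group: "group (AutF S F E)"
proof (rule groupI)
  fix x y assume "x \<in> carrier (AutF S F E)" "y \<in> carrier (AutF S F E)"
  thus "x \<otimes>\<^bsub>AutF S F E\<^esub> y \<in> carrier (AutF S F E)" using comp by (simp add: AutF_simps)
next
  show "\<one>\<^bsub>AutF S F E\<^esub> \<in> carrier (AutF S F E)" using idF by (simp add: AutF_simps)
next
  fix x y z assume xyz: "x \<in> carrier (AutF S F E)" "y \<in> carrier (AutF S F E)" "z \<in> carrier (AutF S F E)"
  have zE: "\<And>e. e \<in> E \<Longrightarrow> z e \<in> E" using Fprops(2) xyz by (auto simp: AutF_simps)
  show "x \<otimes>\<^bsub>AutF S F E\<^esub> y \<otimes>\<^bsub>AutF S F E\<^esub> z = x \<otimes>\<^bsub>AutF S F E\<^esub> (y \<otimes>\<^bsub>AutF S F E\<^esub> z)"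
    by (simp add: AutF_simps) (intro ext, simp add: zE)
next
  fix x assume x: "x \<in> carrier (AutF S F E)"
  have xE: "\<And>e. e \<in> E \<Longrightarrow> x e \<in> E" using Fprops(2) x by (auto simp: AutF_simps)
  have xext: "x \<in> extensional E" using Fprops(1) x by (auto simp: AutF_simps)
  show "\<one>\<^bsub>AutF S F E\<^esub> \<otimes>\<^bsub>AutF S F E\<^esub> x = x"
    by (simp add: AutF_simps) (intro ext, auto simp: xE extensional_arb[OF xext])
next
  fix x assume x: "x \<in> carrier (AutF S F E)"
  have xF: "x \<in> F E E" using x by (simp add: AutF_simps)
  have "restrict (restrict (inv_into E x) E \<circ> x) E = restrict id E"
  proof (intro ext)
    fix e show "restrict (restrict (inv_into E x) E \<circ> x) E e = restrict id E e"
      using Fprops(2,3)[OF xF] by (auto simp: inv_into_f_f)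
  qed
  thus "\<exists>y\<in>carrier (AutF S F E). y \<otimes>\<^bsub>AutF S F E\<^esub> x = \<one>\<^bsub>AutF S F E\<^esub>"
    using invF[OF xF] by (auto simp: AutF_simps)
qed

lemma AutF_inv: assumes "\<alpha> \<in> F E E" shows "inv\<^bsub>AutF S F E\<^esub> \<alpha> = restrict (inv_into E \<alpha>) E"
proof -
  have "restrict (restrict (inv_into E \<alpha>) E \<circ> \<alpha>) E = restrict id E"
  proof (intro ext)
    fix e show "restrict (restrict (inv_into E \<alpha>) E \<circ> \<alpha>) E e = restrict id E e"
      using Fprops(2,3)[OF assms] by (auto simp: inv_into_f_f)
  qed
  thus ?thesis using group.inv_equality[OF AutF_group] invF[OF assms] assms by (simp add: AutF_simps)
qed

lemma conj_comp: assumes "g \<in> E" "h \<in> E"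
  shows "restrict (conjmap S g E \<circ> conjmap S h E) E = conjmap S (h \<otimes>\<^bsub>S\<^esub> g) E"
proof (intro ext)
  interpret group S by (rule grp)
  fix e
  have gc: "g \<in> carrier S" "h \<in> carrier S" using assms Esub by auto
  show "restrict (conjmap S g E \<circ> conjmap S h E) E e = conjmap S (h \<otimes> g) E e"
  proof (cases "e \<in> E")
    case True
    have ec: "e \<in> carrier S" using True Esub by auto
    have "inv h \<otimes> e \<otimes> h \<in> E" using True assms subgroup.m_closed[OF E] subgroup.m_inv_closed[OF E] by auto
    thus ?thesis using True gc ec unfolding conjmap_def by (simp add: m_assoc inv_mult_group)
  next
    case False thus ?thesis unfolding conjmap_def by simp
  qed
qed

lemma Inn_subgroup: "subgroup (Inn S E) (AutF S F E)"
proof (rule group.subgroupI[OF AutF_group])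
  interpret group S by (rule grp)
  show "Inn S E \<subseteq> carrier (AutF S F E)" unfolding Inn_def using conjF by (auto simp: AutF_simps)
  show "Inn S E \<noteq> {}" unfolding Inn_def using subgroup.one_closed[OF E] by blast
next
  interpret group S by (rule grp)
  fix a assume "a \<in> Inn S E"
  then obtain g where g: "g \<in> E" "a = conjmap S g E" unfolding Inn_def by blast
  have gi: "inv g \<in> E" using subgroup.m_inv_closed[OF E g(1)] .
  have gc: "g \<in> carrier S" using g Esub by auto
  have "conjmap S (inv g) E \<otimes>\<^bsub>AutF S F E\<^esub> a = restrict id E"
    using conj_comp[OF gi g(1)] g(2) gc conj_one by (simp add: AutF_simps)
  hence "inv\<^bsub>AutF S F E\<^esub> a = conjmap S (inv g) E"
    using group.inv_equality[OF AutF_group] conjF[OF gi] conjF[OF g(1)] g(2) by (simp add: AutF_simps)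
  thus "inv\<^bsub>AutF S F E\<^esub> a \<in> Inn S E" unfolding Inn_def using gi by blast
next
  interpret group S by (rule grp)
  fix a b assume "a \<in> Inn S E" "b \<in> Inn S E"
  then obtain g h where g: "g \<in> E" "a = conjmap S g E" and h: "h \<in> E" "b = conjmap S h E" unfolding Inn_def by blast
  have "a \<otimes>\<^bsub>AutF S F E\<^esub> b = conjmap S (h \<otimes> g) E" using conj_comp[OF g(1) h(1)] g h by (simp add: AutF_simps)
  moreover have "h \<otimes> g \<in> E" using subgroup.m_closed[OF E h(1) g(1)] .
  ultimately show "a \<otimes>\<^bsub>AutF S F E\<^esub> b \<in> Inn S E" unfolding Inn_def by blast
qed

lemma Inn_normal: "Inn S E \<lhd> AutF S F E"
proof -
  interpret A: group "AutF S F E" by (rule AutF_group)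
  interpret group S by (rule grp)
  show ?thesis unfolding A.normal_inv_iff
  proof (intro conjI ballI)
    show "subgroup (Inn S E) (AutF S F E)" by (rule Inn_subgroup)
  next
    fix x c assume x: "x \<in> carrier (AutF S F E)" and c: "c \<in> Inn S E"
    have xF: "x \<in> F E E" using x by (simp add: AutF_simps)
    obtain g where g: "g \<in> E" "c = conjmap S g E" using c unfolding Inn_def by blast
    have xg: "x g \<in> E" using Fprops(2)[OF xF] g(1) by blast
    have "x \<otimes>\<^bsub>AutF S F E\<^esub> c \<otimes>\<^bsub>AutF S F E\<^esub> inv\<^bsub>AutF S F E\<^esub> x = conjmap S (x g) E"
    proof -
      have "restrict (restrict (x \<circ> c) E \<circ> restrict (inv_into E x) E) E = conjmap S (x g) E"
      proof (intro ext)
        fix e show "restrict (restrict (x \<circ> c) E \<circ> restrict (inv_into E x) E) E e = conjmap S (x g) E e"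
        proof (cases "e \<in> E")
          case True
          have e': "inv_into E x e \<in> E" using True Fsurj[OF xF] by (metis inv_into_into)
          have xe: "x (inv_into E x e) = e" using True Fsurj[OF xF] by (simp add: f_inv_into_f)
          have gi: "inv g \<in> E" using subgroup.m_inv_closed[OF E g(1)] .
          have c1: "inv g \<otimes> inv_into E x e \<in> E" using subgroup.m_closed[OF E gi e'] .
          have "c (inv_into E x e) = inv g \<otimes> inv_into E x e \<otimes> g" using g(2) e' unfolding conjmap_def by simp
          moreover have "inv g \<otimes> inv_into E x e \<otimes> g \<in> E" using subgroup.m_closed[OF E c1 g(1)] .
          moreover have "x (inv g \<otimes> inv_into E x e \<otimes> g) = inv (x g) \<otimes> e \<otimes> x g"
            using Fprops(4)[OF xF c1 g(1)] Fprops(4)[OF xF gi e'] Finv[OF xF g(1)] xe by simp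
          ultimately show ?thesis using True e' unfolding conjmap_def by simp
        next
          case False thus ?thesis unfolding conjmap_def by simp
        qed
      qed
      thus ?thesis using AutF_inv[OF xF] by (simp add: AutF_simps)
    qed
    thus "x \<otimes>\<^bsub>AutF S F E\<^esub> c \<otimes>\<^bsub>AutF S F E\<^esub> inv\<^bsub>AutF S F E\<^esub> x \<in> Inn S E" unfolding Inn_def using xg by blast
  qed
qed

lemma OutF_group: "group (OutF S F E)"
  unfolding OutF_def using normal.factorgroup_is_group[OF Inn_normal] .

lemma OutF_carrier_sub: "C \<in> carrier (OutF S F E) \<Longrightarrow> C \<subseteq> F E E"
  unfolding OutF_def FactGroup_def
  using subgroup.rcosets_carrier[OF Inn_subgroup AutF_group] by (simp add: AutF_simps)

lemma Opprime_sub: "Opprime p (OutF S F E) \<subseteq> carrier (OutF S F E)"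
  unfolding Opprime_def using group.generate_incl[OF OutF_group] by auto

end


context group begin

lemma surj4:
  assumes V: "subgroup V G" and p2: "2 \<le> p"
    and h1: "modhom p G V l1" and h2: "modhom p G V l2" and h3: "modhom p G V l3" and h4: "modhom p G V l4"
    and u: "u1 \<in> V" "u2 \<in> V" "u3 \<in> V" "u4 \<in> V"
    and c1: "l1 u1 = 1" "l2 u1 = 0" and c2: "l1 u2 = 0" "l2 u2 = 1"
    and c3: "l1 u3 = 0" "l2 u3 = 0" "l3 u3 = 1" "l4 u3 = 0"
    and c4: "l1 u4 = 0" "l2 u4 = 0" "l4 u4 = 1"
    and a: "a \<in> {0..<int p}" and b: "b \<in> {0..<int p}" and c: "c \<in> {0..<int p}" and d: "d \<in> {0..<int p}"
  shows "\<exists>v\<in>V. l1 v = a \<and> l2 v = b \<and> l3 v = c \<and> l4 v = d"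
proof -
  have pw: "\<And>l x k. modhom p G V l \<Longrightarrow> x \<in> V \<Longrightarrow> x [^] (k::nat) \<in> V"
  proof -
    fix l x k assume "modhom p G V l" "x \<in> V"
    have "x [^] (int k) \<in> V" by (rule subgroup_int_pow_closed[OF V \<open>x \<in> V\<close>])
    thus "x [^] (k::nat) \<in> V" by (simp add: int_pow_int)
  qed
  note mp = modhom_pow[OF _ V]
  note mh = modhomD(3)
  have rng: "\<And>l x. modhom p G V l \<Longrightarrow> x \<in> V \<Longrightarrow> l x mod int p = l x"
  proof -
    fix l x assume A: "modhom p G V l" "x \<in> V"
    show "l x mod int p = l x" using modhomD(1,2)[OF A(1) A(2)] by (simp add: mod_pos_pos_trivial)
  qed
  define w where "w = u1 [^] nat a \<otimes> u2 [^] nat b"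
  have wV: "w \<in> V" unfolding w_def using pw[OF h1 u(1)] pw[OF h1 u(2)] subgroup.m_closed[OF V] by blast
  have w1: "l1 w = a" "l2 w = b"
  proof -
    have "l1 w = (int (nat a) * l1 u1 mod int p + int (nat b) * l1 u2 mod int p) mod int p"
      unfolding w_def using mh[OF h1 pw[OF h1 u(1)] pw[OF h1 u(2)]] mp[OF h1 u(1)] mp[OF h1 u(2)] by simp
    thus "l1 w = a" using c1 c2 a by simp
    have "l2 w = (int (nat a) * l2 u1 mod int p + int (nat b) * l2 u2 mod int p) mod int p"
      unfolding w_def using mh[OF h2 pw[OF h1 u(1)] pw[OF h1 u(2)]] mp[OF h2 u(1)] mp[OF h2 u(2)] by simp
    thus "l2 w = b" using c1 c2 b by simp
  qed
  define j where "j = nat ((d - l4 w) mod int p)"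
  define w' where "w' = w \<otimes> u4 [^] j"
  have w'V: "w' \<in> V" unfolding w'_def using wV pw[OF h1 u(4)] subgroup.m_closed[OF V] by blast
  have jd: "int j = (d - l4 w) mod int p" unfolding j_def using p2 by simp
  have w'1: "l1 w' = a" "l2 w' = b" "l4 w' = d"
  proof -
    show "l1 w' = a" unfolding w'_def using mh[OF h1 wV pw[OF h1 u(4)]] mp[OF h1 u(4)] c4 w1 rng[OF h1 wV] by simp
    show "l2 w' = b" unfolding w'_def using mh[OF h2 wV pw[OF h1 u(4)]] mp[OF h2 u(4)] c4 w1 rng[OF h2 wV] by simp
    have "l4 w' = (l4 w + (int j) mod int p) mod int p"
      unfolding w'_def using mh[OF h4 wV pw[OF h1 u(4)]] mp[OF h4 u(4)] c4 by simp
    also have "\<dots> = (l4 w + (d - l4 w)) mod int p" unfolding jd by (simp add: mod_add_right_eq)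
    also have "\<dots> = d" using d by simp
    finally show "l4 w' = d" .
  qed
  define i where "i = nat ((c - l3 w') mod int p)"
  define v where "v = w' \<otimes> u3 [^] i"
  have vV: "v \<in> V" unfolding v_def using w'V pw[OF h1 u(3)] subgroup.m_closed[OF V] by blast
  have ic: "int i = (c - l3 w') mod int p" unfolding i_def using p2 by simp
  have "l1 v = a" unfolding v_def using mh[OF h1 w'V pw[OF h1 u(3)]] mp[OF h1 u(3)] c3 w'1 rng[OF h1 w'V] by simp
  moreover have "l2 v = b" unfolding v_def using mh[OF h2 w'V pw[OF h1 u(3)]] mp[OF h2 u(3)] c3 w'1 rng[OF h2 w'V] by simp
  moreover have "l4 v = d" unfolding v_def using mh[OF h4 w'V pw[OF h1 u(3)]] mp[OF h4 u(3)] c3 w'1 rng[OF h4 w'V] by simp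
  moreover have "l3 v = c"
  proof -
    have "l3 v = (l3 w' + (int i) mod int p) mod int p"
      unfolding v_def using mh[OF h3 w'V pw[OF h1 u(3)]] mp[OF h3 u(3)] c3 by simp
    also have "\<dots> = (l3 w' + (c - l3 w')) mod int p" unfolding ic by (simp add: mod_add_right_eq)
    also have "\<dots> = c" using c by simp
    finally show ?thesis .
  qed
  ultimately show ?thesis using vV by blast
qed

lemma generate_comm:
  assumes K: "K \<subseteq> carrier G" and cK: "\<forall>x\<in>K. \<forall>y\<in>K. x \<otimes> y = y \<otimes> x"
  shows "\<forall>x\<in>generate G K. \<forall>y\<in>generate G K. x \<otimes> y = y \<otimes> x"
proof -
  have gc: "generate G K \<subseteq> carrier G" using generate_incl[OF K] .
  have step1: "\<forall>y\<in>K. x \<otimes> y = y \<otimes> x" if "x \<in> generate G K" for x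
    using that
  proof (induction rule: generate.induct)
    case one thus ?case using K by auto
  next
    case (incl h) thus ?case using cK by blast
  next
    case (inv h)
    show ?case
    proof
      fix y assume y: "y \<in> K"
      have hc: "h \<in> carrier G" "y \<in> carrier G" using inv y K by auto
      have e: "h \<otimes> y = y \<otimes> h" using cK inv y by blast
      have "inv h \<otimes> y = inv h \<otimes> (y \<otimes> h) \<otimes> inv h" using hc by (simp add: m_assoc)
      also have "\<dots> = inv h \<otimes> (h \<otimes> y) \<otimes> inv h" using e by simp
      also have "\<dots> = y \<otimes> inv h" using hc by (simp add: m_assoc[symmetric])
      finally show "inv h \<otimes> y = y \<otimes> inv h" .
    qed
  next
    case (eng h1 h2)
    show ?case
    proof
      fix y assume y: "y \<in> K"
      have hc: "h1 \<in> carrier G" "h2 \<in> carrier G" "y \<in> carrier G" using eng gc y K by auto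
      have "h1 \<otimes> h2 \<otimes> y = h1 \<otimes> (y \<otimes> h2)" using eng y hc by (simp add: m_assoc)
      also have "\<dots> = y \<otimes> (h1 \<otimes> h2)" using eng y hc by (simp add: m_assoc[symmetric])
      finally show "h1 \<otimes> h2 \<otimes> y = y \<otimes> (h1 \<otimes> h2)" .
    qed
  qed
  show ?thesis
  proof (intro ballI)
    fix x y assume x: "x \<in> generate G K" and y: "y \<in> generate G K"
    have "\<forall>z\<in>generate G K. z \<otimes> x = x \<otimes> z" using y
    proof -
      have "z \<otimes> x = x \<otimes> z" if z: "z \<in> generate G K" for z
        using z
      proof (induction rule: generate.induct)
        case one thus ?case using gc x by auto
      next
        case (incl h) thus ?case using step1[OF x] by simp
      next
        case (inv h)
        have hc: "h \<in> carrier G" "x \<in> carrier G" using inv K gc x by auto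
        have e: "h \<otimes> x = x \<otimes> h" using step1[OF x] inv by simp
        have "inv h \<otimes> x = inv h \<otimes> (x \<otimes> h) \<otimes> inv h" using hc by (simp add: m_assoc)
        also have "\<dots> = inv h \<otimes> (h \<otimes> x) \<otimes> inv h" using e by simp
        also have "\<dots> = x \<otimes> inv h" using hc by (simp add: m_assoc[symmetric])
        finally show ?case .
      next
        case (eng h1 h2)
        have hc: "h1 \<in> carrier G" "h2 \<in> carrier G" "x \<in> carrier G" using eng gc x by auto
        have "h1 \<otimes> h2 \<otimes> x = h1 \<otimes> (x \<otimes> h2)" using eng hc by (simp add: m_assoc)
        also have "\<dots> = x \<otimes> (h1 \<otimes> h2)" using eng hc by (simp add: m_assoc[symmetric])
        finally show ?case .
      qed
      thus ?thesis by blast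
    qed
    thus "x \<otimes> y = y \<otimes> x" using y by simp
  qed
qed

definition cm :: "'a \<Rightarrow> 'a \<Rightarrow> 'a" where "cm x y = x \<otimes> y \<otimes> inv x \<otimes> inv y"

lemma cm_carrier [simp]: "x \<in> carrier G \<Longrightarrow> y \<in> carrier G \<Longrightarrow> cm x y \<in> carrier G"
  unfolding cm_def by simp

lemma cm_mult_left:
  assumes V: "subgroup V G" and TV: "T \<subseteq> V" and cen: "\<forall>t\<in>T. \<forall>v\<in>V. t \<otimes> v = v \<otimes> t"
    and cT: "\<forall>x\<in>V. \<forall>y\<in>V. cm x y \<in> T" and xyz: "x \<in> V" "y \<in> V" "z \<in> V"
  shows "cm (x \<otimes> y) z = cm x z \<otimes> cm y z"
proof -
  have c: "x \<in> carrier G" "y \<in> carrier G" "z \<in> carrier G" using xyz subgroup.subset[OF V] by auto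
  have e1: "cm (x \<otimes> y) z = x \<otimes> cm y z \<otimes> z \<otimes> inv x \<otimes> inv z"
    using c by (simp add: cm_def m_assoc inv_mult_group)
  have cyz: "cm y z \<in> T" using cT xyz by blast
  have e2: "x \<otimes> cm y z = cm y z \<otimes> x" using cen cyz xyz(1) by auto
  have e2': "x \<otimes> (cm y z \<otimes> w) = cm y z \<otimes> (x \<otimes> w)" if "w \<in> carrier G" for w
    using e2 c that by (simp add: m_assoc[symmetric])
  have "cm (x \<otimes> y) z = cm y z \<otimes> cm x z" unfolding e1 using c e2' by (simp add: m_assoc cm_def[of x z])
  also have "\<dots> = cm x z \<otimes> cm y z"
  proof -
    have "cm x z \<in> T" using cT xyz by blast
    hence "cm x z \<in> V" using TV by blast
    thus ?thesis using cen cyz by auto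
  qed
  finally show ?thesis .
qed

lemma cm_mult_right:
  assumes V: "subgroup V G" and TV: "T \<subseteq> V" and cen: "\<forall>t\<in>T. \<forall>v\<in>V. t \<otimes> v = v \<otimes> t"
    and cT: "\<forall>x\<in>V. \<forall>y\<in>V. cm x y \<in> T" and xyz: "x \<in> V" "y \<in> V" "z \<in> V"
  shows "cm x (y \<otimes> z) = cm x y \<otimes> cm x z"
proof -
  have c: "x \<in> carrier G" "y \<in> carrier G" "z \<in> carrier G" using xyz subgroup.subset[OF V] by auto
  have e1: "cm x (y \<otimes> z) = x \<otimes> y \<otimes> inv x \<otimes> cm x z \<otimes> inv y"
    using c by (simp add: cm_def m_assoc inv_mult_group)
  have iy: "inv y \<in> V" using subgroup.m_inv_closed[OF V xyz(2)] .
  have cxz: "cm x z \<in> T" using cT xyz by blast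
  have e2: "cm x z \<otimes> inv y = inv y \<otimes> cm x z" using cen cxz iy by auto
  have "cm x (y \<otimes> z) = x \<otimes> y \<otimes> inv x \<otimes> inv y \<otimes> cm x z" unfolding e1 using c e2 by (simp add: m_assoc)
  also have "\<dots> = cm x y \<otimes> cm x z" using c by (simp add: m_assoc cm_def[of x y])
  finally show ?thesis .
qed

lemma cm_T_left:
  assumes V: "subgroup V G" and cen: "\<forall>t\<in>T. \<forall>v\<in>V. t \<otimes> v = v \<otimes> t" and t: "t \<in> T" and TV: "T \<subseteq> V" and z: "z \<in> V"
  shows "cm t z = \<one>" "cm z t = \<one>"
proof -
  have c: "t \<in> carrier G" "z \<in> carrier G" using t TV z subgroup.subset[OF V] by auto
  have e: "t \<otimes> z = z \<otimes> t" using cen t z by blast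
  show "cm t z = \<one>" unfolding cm_def using e c by (simp add: m_assoc)
  have "z \<otimes> t \<otimes> inv z \<otimes> inv t = t \<otimes> z \<otimes> inv z \<otimes> inv t" using e by simp
  thus "cm z t = \<one>" unfolding cm_def using c by (simp add: m_assoc)
qed

lemma cm_pow:
  assumes V: "subgroup V G" and TV: "T \<subseteq> V" and cen: "\<forall>t\<in>T. \<forall>v\<in>V. t \<otimes> v = v \<otimes> t"
    and cT: "\<forall>x\<in>V. \<forall>y\<in>V. cm x y \<in> T" and xz: "x \<in> V" "z \<in> V"
  shows "cm (x [^] (n::nat)) z = (cm x z) [^] n" "cm z (x [^] (n::nat)) = (cm z x) [^] n"
proof -
  have xn: "\<And>n::nat. x [^] n \<in> V"
  proof -
    fix n :: nat
    have "x [^] (int n) \<in> V" by (rule subgroup_int_pow_closed[OF V xz(1)])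
    thus "x [^] n \<in> V" by (simp add: int_pow_int)
  qed
  have c: "x \<in> carrier G" "z \<in> carrier G" using xz subgroup.subset[OF V] by auto
  show "cm (x [^] (n::nat)) z = (cm x z) [^] n"
  proof (induction n)
    case 0 thus ?case using c by (simp add: cm_def)
  next
    case (Suc n)
    have "cm (x [^] Suc n) z = cm (x [^] n \<otimes> x) z" using c by (simp add: nat_pow_Suc)
    also have "\<dots> = cm (x [^] n) z \<otimes> cm x z" by (rule cm_mult_left[OF V TV cen cT xn xz(1) xz(2)])
    finally show ?case using Suc c by (simp add: nat_pow_Suc)
  qed
  show "cm z (x [^] (n::nat)) = (cm z x) [^] n"
  proof (induction n)
    case 0 thus ?case using c by (simp add: cm_def)
  next
    case (Suc n)
    have "cm z (x [^] Suc n) = cm z (x [^] n \<otimes> x)" using c by (simp add: nat_pow_Suc)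
    also have "\<dots> = cm z (x [^] n) \<otimes> cm z x" by (rule cm_mult_right[OF V TV cen cT xz(2) xn xz(1)])
    finally show ?case using Suc c by (simp add: nat_pow_Suc)
  qed
qed

lemma cm_self: "x \<in> carrier G \<Longrightarrow> cm x x = \<one>" unfolding cm_def by (simp add: m_assoc)

lemma cm_swap: assumes "x \<in> carrier G" "y \<in> carrier G" shows "cm y x = inv (cm x y)"
proof -
  have "cm y x \<otimes> cm x y = \<one>" using assms by (simp add: cm_def m_assoc)
  thus ?thesis using inv_equality assms by simp
qed

end


locale VS = group S for S :: "('a,'b) monoid_scheme" (structure) +
  fixes p :: nat and m :: nat and V T :: "'a set" and th1 th2 :: "'a \<Rightarrow> int" and al :: "'a \<Rightarrow> 'a"
  assumes fin: "finite (carrier S)" and pr: "Factorial_Ring.prime p" and podd: "odd p"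
    and ordS: "order S = p ^ m"
    and V: "subgroup V S" and T: "subgroup T S" and TV: "T \<subseteq> V"
    and h1: "modhom p S V th1" and h2: "modhom p S V th2"
    and ker: "\<And>v. v \<in> V \<Longrightarrow> (th1 v = 0 \<and> th2 v = 0) \<longleftrightarrow> v \<in> T"
    and surj: "\<And>a b. a \<in> {0..<int p} \<Longrightarrow> b \<in> {0..<int p} \<Longrightarrow> \<exists>v\<in>V. th1 v = a \<and> th2 v = b"
    and rk: "rank S V \<le> 3"
    and cent: "\<And>v. v \<in> V \<Longrightarrow> \<exists>c t. t \<in> T \<and> c \<in> V \<and> (\<forall>x\<in>T. c \<otimes> x = x \<otimes> c) \<and> v = c \<otimes> t"
    and alV: "\<And>v. v \<in> V \<Longrightarrow> al v \<in> V"
    and alhom: "\<And>x y. x \<in> V \<Longrightarrow> y \<in> V \<Longrightarrow> al (x \<otimes> y) = al x \<otimes> al y"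
    and alT: "\<And>t. t \<in> T \<Longrightarrow> al t = t"
    and al1: "\<And>v. v \<in> V \<Longrightarrow> th1 (al v) = (- th1 v) mod int p"
    and al2: "\<And>v. v \<in> V \<Longrightarrow> th2 (al v) = (- th2 v) mod int p"
begin

lemma p2: "2 \<le> p" using pr prime_ge_2_nat by blast
lemma Vsub: "V \<subseteq> carrier S" using subgroup.subset[OF V] .
lemma Tsub: "T \<subseteq> carrier S" using subgroup.subset[OF T] .
lemma finV: "finite V" using fin Vsub finite_subset by blast
lemma finT: "finite T" using fin Tsub finite_subset by blast

abbreviation "GT \<equiv> S\<lparr>carrier := T\<rparr>"
lemma GT: "group GT" using subgroup_imp_group[OF T] .
lemma finGT: "finite (carrier GT)" using finT by simp
lemma ordT: "\<exists>k. order GT = p ^ k"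
  using card_subgroup_ppow[OF fin ordS pr T] unfolding order_def by auto

lemma modhom_GT: "modhom p GT T k = modhom p S T k" unfolding modhom_def by simp

lemma thT: "t \<in> T \<Longrightarrow> th1 t = 0 \<and> th2 t = 0" using ker TV by blast

lemma basis: "\<exists>v1 v2. v1 \<in> V \<and> v2 \<in> V \<and> th1 v1 = 1 \<and> th2 v1 = 0 \<and> th1 v2 = 0 \<and> th2 v2 = 1"
proof -
  have r: "1 \<in> {0..<int p}" "0 \<in> {0..<int p}" using p2 by auto
  obtain v1 where "v1 \<in> V" "th1 v1 = 1" "th2 v1 = 0" using surj[OF r(1) r(2)] by blast
  moreover obtain v2 where "v2 \<in> V" "th1 v2 = 0" "th2 v2 = 1" using surj[OF r(2) r(1)] by blast
  ultimately show ?thesis by blast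
qed

lemma contra4:
  assumes l3: "modhom p S V l3" and l4: "modhom p S V l4" and ab: "a' \<in> T" "b' \<in> T"
    and c: "l3 a' = 1" "l4 a' = 0" "l4 b' = 1"
  shows False
proof -
  obtain v1 v2 where v: "v1 \<in> V" "v2 \<in> V" "th1 v1 = 1" "th2 v1 = 0" "th1 v2 = 0" "th2 v2 = 1"
    using basis by blast
  have abV: "a' \<in> V" "b' \<in> V" using ab TV by auto
  have "4 \<le> rank S V"
  proof (rule rank_ge4[OF is_group V finV p2 h1 h2 l3 l4])
    fix a b c d assume "a \<in> {0..<int p}" "b \<in> {0..<int p}" "c \<in> {0..<int p}" "d \<in> {0..<int p}"
    thus "\<exists>v\<in>V. th1 v = a \<and> th2 v = b \<and> l3 v = c \<and> l4 v = d"
      using surj4[OF V p2 h1 h2 l3 l4 v(1,2) abV(1) abV(2) v(3,4) v(5,6)] thT[OF ab(1)] thT[OF ab(2)] c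
      by blast
  qed
  thus False using rk by simp
qed

lemma modhom_mult0:
  assumes k: "modhom p S T k" and d: "d \<in> T" "k d = 0" and x: "x \<in> T"
  shows "k (d \<otimes> x) = k x"
  using modhomD[OF k] d x by (simp add: mod_pos_pos_trivial)

lemma T_abelian: "\<forall>x\<in>T. \<forall>y\<in>T. x \<otimes> y = y \<otimes> x"
proof (rule ccontr)
  assume nab: "\<not> (\<forall>x\<in>T. \<forall>y\<in>T. x \<otimes> y = y \<otimes> x)"
  define Z where "Z = {g \<in> T. \<forall>x\<in>T. g \<otimes> x = x \<otimes> g}"
  have Zsub: "Z \<subseteq> T" unfolding Z_def by auto
  have ZS: "subgroup Z S"
  proof (rule subgroupI)
    show "Z \<subseteq> carrier S" using Zsub Tsub by auto
    have "\<forall>x\<in>T. \<one> \<otimes> x = x \<otimes> \<one>"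
    proof
      fix x assume "x \<in> T"
      hence "x \<in> carrier S" using Tsub by blast
      thus "\<one> \<otimes> x = x \<otimes> \<one>" by simp
    qed
    hence "\<one> \<in> Z" unfolding Z_def using subgroup.one_closed[OF T] by blast
    thus "Z \<noteq> {}" by blast
  next
    fix a assume a: "a \<in> Z"
    have aT: "a \<in> T" "a \<in> carrier S" using a Zsub Tsub by auto
    have "inv a \<otimes> x = x \<otimes> inv a" if x: "x \<in> T" for x
    proof -
      have xc: "x \<in> carrier S" using x Tsub by auto
      have e: "a \<otimes> x = x \<otimes> a" using a x unfolding Z_def by blast
      have "inv a \<otimes> x = inv a \<otimes> (x \<otimes> a) \<otimes> inv a" using aT xc by (simp add: m_assoc)
      also have "\<dots> = inv a \<otimes> (a \<otimes> x) \<otimes> inv a" using e by simp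
      also have "\<dots> = x \<otimes> inv a" using aT xc by (simp add: m_assoc[symmetric])
      finally show ?thesis .
    qed
    thus "inv a \<in> Z" unfolding Z_def using subgroup.m_inv_closed[OF T aT(1)] by blast
  next
    fix a b assume ab: "a \<in> Z" "b \<in> Z"
    have c: "a \<in> carrier S" "b \<in> carrier S" "a \<in> T" "b \<in> T" using ab Zsub Tsub by auto
    have "a \<otimes> b \<otimes> x = x \<otimes> (a \<otimes> b)" if x: "x \<in> T" for x
    proof -
      have xc: "x \<in> carrier S" using x Tsub by auto
      have ea: "a \<otimes> x = x \<otimes> a" and eb: "b \<otimes> x = x \<otimes> b" using ab x unfolding Z_def by blast+
      have "a \<otimes> b \<otimes> x = a \<otimes> (x \<otimes> b)" using c xc eb by (simp add: m_assoc)
      also have "\<dots> = x \<otimes> (a \<otimes> b)" using c xc ea by (simp add: m_assoc[symmetric])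
      finally show ?thesis .
    qed
    thus "a \<otimes> b \<in> Z" unfolding Z_def using subgroup.m_closed[OF T c(3,4)] by blast
  qed
  have ZGT: "subgroup Z GT" using subgroup_incl[OF ZS T Zsub] .
  have nc: "\<forall>g\<in>carrier GT. generate GT (insert g Z) \<noteq> carrier GT"
  proof (intro ballI notI)
    fix g assume g: "g \<in> carrier GT" and eq: "generate GT (insert g Z) = carrier GT"
    have K: "insert g Z \<subseteq> T" using g Zsub by auto
    have "generate S (insert g Z) = T" using eq generate_consistent[OF K T] by simp
    moreover have comm: "\<forall>x\<in>insert g Z. \<forall>y\<in>insert g Z. x \<otimes> y = y \<otimes> x"
    proof (intro ballI)
      fix x y assume x: "x \<in> insert g Z" and y: "y \<in> insert g Z"
      have gT: "g \<in> T" using g by simp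
      show "x \<otimes> y = y \<otimes> x"
      proof (cases "x = g")
        case True
        show ?thesis
        proof (cases "y = g")
          case True with \<open>x = g\<close> show ?thesis by simp
        next
          case False hence "y \<in> Z" using y by simp
          hence "y \<otimes> g = g \<otimes> y" using gT unfolding Z_def by blast
          thus ?thesis using \<open>x = g\<close> by simp
        qed
      next
        case False hence xZ: "x \<in> Z" using x by simp
        have "y \<in> T" using y gT Zsub by blast
        thus ?thesis using xZ unfolding Z_def by blast
      qed
    qed
    have K': "insert g Z \<subseteq> carrier S" using K Tsub by blast
    have "\<forall>x\<in>generate S (insert g Z). \<forall>y\<in>generate S (insert g Z). x \<otimes> y = y \<otimes> x"
      by (rule generate_comm[OF K' comm])
    ultimately have "\<forall>x\<in>T. \<forall>y\<in>T. x \<otimes> y = y \<otimes> x" by simp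
    thus False using nab by simp
  qed
  obtain k1 k2 a b where kk: "modhom p GT (carrier GT) k1" "modhom p GT (carrier GT) k2"
    "\<forall>h\<in>Z. k1 h = 0 \<and> k2 h = 0" "a \<in> carrier GT" "b \<in> carrier GT" "k1 a = 1" "k2 a = 0" "k2 b = 1"
    using ordT group.pgroup_two_homs[OF GT finGT _ pr ZGT nc] by blast
  have k1: "modhom p S T k1" and k2: "modhom p S T k2" using kk(1,2) modhom_GT by auto
  define R where "R = (\<lambda>v t. t \<in> T \<and> (\<forall>x\<in>T. (v \<otimes> inv t) \<otimes> x = x \<otimes> (v \<otimes> inv t)))"
  have exR: "\<exists>t. R v t" if v: "v \<in> V" for v
  proof -
    obtain c t where ct: "t \<in> T" "c \<in> V" "\<forall>x\<in>T. c \<otimes> x = x \<otimes> c" "v = c \<otimes> t" using cent[OF v] by blast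
    have cc: "c \<in> carrier S" "t \<in> carrier S" using ct Vsub Tsub by auto
    have "v \<otimes> inv t = c" using ct(4) cc by (simp add: m_assoc)
    thus ?thesis unfolding R_def using ct by auto
  qed
  have Rcomm: "c \<otimes> d \<otimes> x = x \<otimes> (c \<otimes> d)"
    if "c \<in> carrier S" "d \<in> carrier S" "x \<in> carrier S" "c \<otimes> x = x \<otimes> c" "d \<otimes> x = x \<otimes> d" for c d x
  proof -
    have "c \<otimes> d \<otimes> x = c \<otimes> (x \<otimes> d)" using that(1,2,3,5) by (simp add: m_assoc)
    also have "\<dots> = x \<otimes> (c \<otimes> d)" using that(1,2,3,4) by (simp add: m_assoc[symmetric])
    finally show ?thesis .
  qed
  have Rinv: "inv c \<otimes> x = x \<otimes> inv c" if "c \<in> carrier S" "x \<in> carrier S" "c \<otimes> x = x \<otimes> c" for c x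
  proof -
    have "inv c \<otimes> x = inv c \<otimes> (x \<otimes> c) \<otimes> inv c" using that(1,2) by (simp add: m_assoc)
    also have "\<dots> = inv c \<otimes> (c \<otimes> x) \<otimes> inv c" using that(3) by simp
    also have "\<dots> = x \<otimes> inv c" using that(1,2) by (simp add: m_assoc[symmetric])
    finally show ?thesis .
  qed
  have chi: "modhom p S V (\<lambda>v. k (SOME t. R v t)) \<and> (\<forall>t\<in>T. k (SOME s. R t s) = k t)"
    if k: "modhom p S T k" and kZ: "\<forall>z\<in>Z. k z = 0" for k
  proof -
    have uniq: "k t = k t'" if v: "v \<in> V" and "R v t" "R v t'" for v t t'
    proof -
      have tt: "t \<in> T" "t' \<in> T" using that unfolding R_def by auto
      have c: "v \<in> carrier S" "t \<in> carrier S" "t' \<in> carrier S" using v tt Vsub Tsub by auto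
      have e: "t \<otimes> inv t' = inv (v \<otimes> inv t) \<otimes> (v \<otimes> inv t')" using c by (simp add: inv_mult_group m_assoc)
      have "t \<otimes> inv t' \<in> Z"
      proof -
        have "inv (v \<otimes> inv t) \<otimes> (v \<otimes> inv t') \<otimes> x = x \<otimes> (inv (v \<otimes> inv t) \<otimes> (v \<otimes> inv t'))" if x: "x \<in> T" for x
        proof -
          have xc: "x \<in> carrier S" using x Tsub by auto
          have a1: "(v \<otimes> inv t) \<otimes> x = x \<otimes> (v \<otimes> inv t)" using \<open>R v t\<close> x unfolding R_def by blast
          have a2: "(v \<otimes> inv t') \<otimes> x = x \<otimes> (v \<otimes> inv t')" using \<open>R v t'\<close> x unfolding R_def by blast
          have a3: "inv (v \<otimes> inv t) \<otimes> x = x \<otimes> inv (v \<otimes> inv t)" using Rinv[OF _ xc a1] c by simp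
          show ?thesis using Rcomm[OF _ _ xc a3 a2] c by simp
        qed
        moreover have "t \<otimes> inv t' \<in> T" using subgroup.m_closed[OF T tt(1) subgroup.m_inv_closed[OF T tt(2)]] .
        ultimately show ?thesis unfolding Z_def using e by simp
      qed
      hence k0: "k (t \<otimes> inv t') = 0" using kZ by blast
      have "t = (t \<otimes> inv t') \<otimes> t'" using c by (simp add: m_assoc)
      hence "k t = k ((t \<otimes> inv t') \<otimes> t')" by simp
      also have "\<dots> = k t'" using modhom_mult0[OF k _ k0 tt(2)] subgroup.m_closed[OF T tt(1) subgroup.m_inv_closed[OF T tt(2)]] by simp
      finally show ?thesis .
    qed
    have someR: "R v (SOME t. R v t)" if "v \<in> V" for v using exR[OF that] by (rule someI_ex)
    have mh: "modhom p S V (\<lambda>v. k (SOME t. R v t))"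
      unfolding modhom_def
    proof (intro conjI ballI)
      fix v assume v: "v \<in> V"
      have "(SOME t. R v t) \<in> T" using someR[OF v] unfolding R_def by blast
      thus "0 \<le> k (SOME t. R v t)" "k (SOME t. R v t) < int p" using modhomD(1,2)[OF k] by auto
    next
      fix v w assume vw: "v \<in> V" "w \<in> V"
      define t where "t = (SOME t. R v t)"
      define s where "s = (SOME t. R w t)"
      have Rt: "R v t" "R w s" unfolding t_def s_def using someR vw by auto
      have ts: "t \<in> T" "s \<in> T" using Rt unfolding R_def by auto
      have c: "v \<in> carrier S" "w \<in> carrier S" "t \<in> carrier S" "s \<in> carrier S" using vw ts Vsub Tsub by auto
      have "R (v \<otimes> w) (t \<otimes> s)"
      proof -
        have e: "v \<otimes> w \<otimes> inv (t \<otimes> s) = (v \<otimes> inv t) \<otimes> (t \<otimes> (w \<otimes> inv s) \<otimes> inv t)"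
          using c by (simp add: m_assoc inv_mult_group)
        have wc: "(w \<otimes> inv s) \<otimes> x = x \<otimes> (w \<otimes> inv s)" if "x \<in> T" for x using Rt(2) that unfolding R_def by blast
        have e2: "t \<otimes> (w \<otimes> inv s) \<otimes> inv t = w \<otimes> inv s"
        proof -
          have "t \<otimes> (w \<otimes> inv s) = (w \<otimes> inv s) \<otimes> t" using wc[OF ts(1)] by simp
          thus ?thesis using c by (simp add: m_assoc)
        qed
        have "(v \<otimes> inv t) \<otimes> (w \<otimes> inv s) \<otimes> x = x \<otimes> ((v \<otimes> inv t) \<otimes> (w \<otimes> inv s))" if x: "x \<in> T" for x
        proof -
          have xc: "x \<in> carrier S" using x Tsub by auto
          have a1: "(v \<otimes> inv t) \<otimes> x = x \<otimes> (v \<otimes> inv t)" using Rt(1) x unfolding R_def by blast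
          show ?thesis using Rcomm[OF _ _ xc a1 wc[OF x]] c by simp
        qed
        moreover have "t \<otimes> s \<in> T" using subgroup.m_closed[OF T ts] .
        ultimately show ?thesis unfolding R_def using e e2 by simp
      qed
      hence "k (SOME u. R (v \<otimes> w) u) = k (t \<otimes> s)"
        using uniq[OF subgroup.m_closed[OF V vw] someR[OF subgroup.m_closed[OF V vw]]] by blast
      also have "\<dots> = (k t + k s) mod int p" using modhomD(3)[OF k ts] .
      finally show "k (SOME u. R (v \<otimes> w) u) = (k (SOME t. R v t) + k (SOME t. R w t)) mod int p"
        unfolding t_def s_def .
    qed
    have "k (SOME s. R t s) = k t" if t: "t \<in> T" for t
    proof -
      have tV: "t \<in> V" using t TV by auto
      have tc: "t \<in> carrier S" using t Tsub by blast
      have "\<forall>x\<in>T. (t \<otimes> inv t) \<otimes> x = x \<otimes> (t \<otimes> inv t)"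
      proof
        fix x assume "x \<in> T"
        hence "x \<in> carrier S" using Tsub by blast
        thus "(t \<otimes> inv t) \<otimes> x = x \<otimes> (t \<otimes> inv t)" using tc by simp
      qed
      hence "R t t" unfolding R_def using t by blast
      thus ?thesis using uniq[OF tV someR[OF tV]] by blast
    qed
    thus ?thesis using mh by blast
  qed
  have c1: "modhom p S V (\<lambda>v. k1 (SOME t. R v t))" "\<forall>t\<in>T. k1 (SOME s. R t s) = k1 t"
    using chi[OF k1] kk(3) by auto
  have c2: "modhom p S V (\<lambda>v. k2 (SOME t. R v t))" "\<forall>t\<in>T. k2 (SOME s. R t s) = k2 t"
    using chi[OF k2] kk(3) by auto
  have abT: "a \<in> T" "b \<in> T" using kk(4,5) by auto
  show False
    using contra4[OF c1(1) c2(1) abT] c1(2) c2(2) abT kk(6,7,8) by simp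
qed

end


context VS begin

lemma T_central: "\<forall>t\<in>T. \<forall>v\<in>V. t \<otimes> v = v \<otimes> t"
proof (intro ballI)
  fix t v assume t: "t \<in> T" and v: "v \<in> V"
  obtain c t' where ct: "t' \<in> T" "c \<in> V" "\<forall>x\<in>T. c \<otimes> x = x \<otimes> c" "v = c \<otimes> t'" using cent[OF v] by blast
  have cc: "c \<in> carrier S" "t' \<in> carrier S" "t \<in> carrier S" using ct t Vsub Tsub by auto
  have e1: "c \<otimes> t = t \<otimes> c" using ct(3) t by blast
  have e2: "t \<otimes> t' = t' \<otimes> t" using T_abelian t ct(1) by blast
  have "t \<otimes> v = t \<otimes> c \<otimes> t'" using ct(4) cc by (simp add: m_assoc)
  also have "\<dots> = c \<otimes> (t \<otimes> t')" using e1[symmetric] cc by (simp add: m_assoc[symmetric])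
  also have "\<dots> = c \<otimes> (t' \<otimes> t)" using e2 by simp
  also have "\<dots> = v \<otimes> t" using ct(4) cc by (simp add: m_assoc)
  finally show "t \<otimes> v = v \<otimes> t" .
qed

lemma modhom_cm: assumes l: "modhom p S V l" and xy: "x \<in> V" "y \<in> V" shows "l (cm x y) = 0"
proof -
  have c: "inv x \<in> V" "inv y \<in> V" "x \<otimes> y \<in> V" "x \<otimes> y \<otimes> inv x \<in> V"
    using xy subgroup.m_inv_closed[OF V] subgroup.m_closed[OF V] by auto
  have "l (cm x y) = (((l x + l y) mod int p + (- l x) mod int p) mod int p + (- l y) mod int p) mod int p"
    unfolding cm_def
    using modhomD(3)[OF l c(4) c(2)] modhomD(3)[OF l c(3) c(1)] modhomD(3)[OF l xy]
      modhom_inv[OF l V xy(1)] modhom_inv[OF l V xy(2)] by simp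
  also have "\<dots> = 0" by (simp add: mod_add_left_eq mod_add_right_eq mod_diff_left_eq)
  finally show ?thesis .
qed

lemma cm_T: "\<forall>x\<in>V. \<forall>y\<in>V. cm x y \<in> T"
proof (intro ballI)
  fix x y assume xy: "x \<in> V" "y \<in> V"
  have "cm x y \<in> V" unfolding cm_def
    using xy subgroup.m_inv_closed[OF V] subgroup.m_closed[OF V] by auto
  thus "cm x y \<in> T" using ker modhom_cm[OF h1 xy] modhom_cm[OF h2 xy] by blast
qed

lemma derived_set_cm: "derived_set S V = {cm x y | x y. x \<in> V \<and> y \<in> V}"
  unfolding cm_def by blast

lemma derived_T: "derived S V \<subseteq> T"
  unfolding derived_def
proof (rule generate_subgroup_incl[OF _ T])
  show "derived_set S V \<subseteq> T"
  proof
    fix z assume "z \<in> derived_set S V"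
    then obtain h1 h2 where h: "h1 \<in> V" "h2 \<in> V" "z = h1 \<otimes> h2 \<otimes> inv h1 \<otimes> inv h2" by blast
    hence "z = cm h1 h2" unfolding cm_def by simp
    thus "z \<in> T" using cm_T h by blast
  qed
qed

lemma powV: "x \<in> V \<Longrightarrow> x [^] (n::nat) \<in> V"
proof -
  assume x: "x \<in> V"
  have "x [^] (int n) \<in> V" by (rule subgroup_int_pow_closed[OF V x])
  thus ?thesis by (simp add: int_pow_int)
qed

lemma decomp:
  assumes v1: "v1 \<in> V" "th1 v1 = 1" "th2 v1 = 0" and v2: "v2 \<in> V" "th1 v2 = 0" "th2 v2 = 1"
    and v: "v \<in> V"
  shows "\<exists>t\<in>T. v = v1 [^] nat (th1 v) \<otimes> v2 [^] nat (th2 v) \<otimes> t"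
proof -
  define w where "w = v1 [^] nat (th1 v) \<otimes> v2 [^] nat (th2 v)"
  have wV: "w \<in> V" unfolding w_def using powV v1(1) v2(1) subgroup.m_closed[OF V] by blast
  have r: "0 \<le> th1 v" "th1 v < int p" "0 \<le> th2 v" "th2 v < int p" using modhomD[OF h1] modhomD[OF h2] v by auto
  have w1: "th1 w = th1 v" "th2 w = th2 v"
  proof -
    have "th1 w = (int (nat (th1 v)) * th1 v1 mod int p + int (nat (th2 v)) * th1 v2 mod int p) mod int p"
      unfolding w_def using modhomD(3)[OF h1 powV[OF v1(1)] powV[OF v2(1)]] modhom_pow[OF h1 V v1(1)] modhom_pow[OF h1 V v2(1)] by simp
    thus "th1 w = th1 v" using v1 v2 r by simp
    have "th2 w = (int (nat (th1 v)) * th2 v1 mod int p + int (nat (th2 v)) * th2 v2 mod int p) mod int p"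
      unfolding w_def using modhomD(3)[OF h2 powV[OF v1(1)] powV[OF v2(1)]] modhom_pow[OF h2 V v1(1)] modhom_pow[OF h2 V v2(1)] by simp
    thus "th2 w = th2 v" using v1 v2 r by simp
  qed
  define t where "t = inv w \<otimes> v"
  have iw: "inv w \<in> V" using subgroup.m_inv_closed[OF V wV] .
  have tV: "t \<in> V" unfolding t_def using subgroup.m_closed[OF V iw v] .
  have "th1 t = 0" unfolding t_def using modhomD(3)[OF h1 iw v] modhom_inv[OF h1 V wV] w1 by (simp add: mod_add_left_eq)
  moreover have "th2 t = 0" unfolding t_def using modhomD(3)[OF h2 iw v] modhom_inv[OF h2 V wV] w1 by (simp add: mod_add_left_eq)
  ultimately have tT: "t \<in> T" using ker[OF tV] by blast
  have "v = w \<otimes> t" unfolding t_def using wV v Vsub by (simp add: m_assoc[symmetric] subsetD)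
  thus ?thesis using tT unfolding w_def by blast
qed

end


context VS begin

lemma card_derived: "card (derived S V) \<le> p"
proof -
  obtain v1 v2 where v: "v1 \<in> V" "v2 \<in> V" "th1 v1 = 1" "th2 v1 = 0" "th1 v2 = 0" "th2 v2 = 1"
    using basis by blast
  note cen = T_central and cT = cm_T
  have vc: "v1 \<in> carrier S" "v2 \<in> carrier S" using v Vsub by auto
  define c where "c = cm v1 v2"
  have cc: "c \<in> carrier S" unfolding c_def using vc by simp
  define H where "H = generate S {c}"
  have H: "subgroup H S" unfolding H_def using generate_is_subgroup cc by auto
  have cH: "c \<in> H" unfolding H_def by (rule generate.incl) simp
  have icH: "inv c \<in> H" using subgroup.m_inv_closed[OF H cH] .
  have Hpow: "x [^] (n::nat) \<in> H" if "x \<in> H" for x n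
  proof -
    have "x [^] (int n) \<in> H" by (rule subgroup_int_pow_closed[OF H that])
    thus ?thesis by (simp add: int_pow_int)
  qed
  have dec: "\<exists>a b t. t \<in> T \<and> w = v1 [^] (a::nat) \<otimes> v2 [^] (b::nat) \<otimes> t" if "w \<in> V" for w
    using decomp[OF v(1,3,4) v(2,5,6) that] by blast
  have p1: "v1 [^] (n::nat) \<in> V" "v2 [^] (n::nat) \<in> V" for n using powV v by auto
  have cmw: "\<exists>(a::nat) (b::nat). cm v1 w = c [^] b \<and> cm v2 w = inv c [^] a" if w: "w \<in> V" for w
  proof -
    obtain a b :: nat and t where abt: "t \<in> T" "w = v1 [^] a \<otimes> v2 [^] b \<otimes> t" using dec[OF w] by blast
    have tV: "t \<in> V" using abt TV by auto
    have pp: "v1 [^] a \<otimes> v2 [^] b \<in> V" using p1 subgroup.m_closed[OF V] by blast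
    have "cm v1 w = cm v1 (v1 [^] a \<otimes> v2 [^] b) \<otimes> cm v1 t"
      unfolding abt(2) by (rule cm_mult_right[OF V TV cen cT v(1) pp tV])
    also have "\<dots> = cm v1 (v1 [^] a) \<otimes> cm v1 (v2 [^] b)"
      using cm_mult_right[OF V TV cen cT v(1) p1(1) p1(2)] cm_T_left(2)[OF V cen abt(1) TV v(1)] vc by simp
    also have "\<dots> = c [^] b"
      using cm_pow(2)[OF V TV cen cT v(1) v(1)] cm_pow(2)[OF V TV cen cT v(2) v(1)] cm_self vc
      unfolding c_def by simp
    finally have e1: "cm v1 w = c [^] b" .
    have "cm v2 w = cm v2 (v1 [^] a \<otimes> v2 [^] b) \<otimes> cm v2 t"
      unfolding abt(2) by (rule cm_mult_right[OF V TV cen cT v(2) pp tV])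
    also have "\<dots> = cm v2 (v1 [^] a) \<otimes> cm v2 (v2 [^] b)"
      using cm_mult_right[OF V TV cen cT v(2) p1(1) p1(2)] cm_T_left(2)[OF V cen abt(1) TV v(2)] vc by simp
    also have "\<dots> = inv c [^] a"
      using cm_pow(2)[OF V TV cen cT v(1) v(2)] cm_pow(2)[OF V TV cen cT v(2) v(2)] cm_self cm_swap[OF vc(1) vc(2)] vc
      unfolding c_def by simp
    finally have e2: "cm v2 w = inv c [^] a" .
    show ?thesis using e1 e2 by blast
  qed
  have cmH: "cm u w \<in> H" if uw: "u \<in> V" "w \<in> V" for u w
  proof -
    obtain a b :: nat and t where abt: "t \<in> T" "u = v1 [^] a \<otimes> v2 [^] b \<otimes> t" using dec[OF uw(1)] by blast
    have pp: "v1 [^] a \<otimes> v2 [^] b \<in> V" using p1 subgroup.m_closed[OF V] by blast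
    have tV: "t \<in> V" using abt TV by auto
    obtain a' b' :: nat where ab': "cm v1 w = c [^] b'" "cm v2 w = inv c [^] a'" using cmw[OF uw(2)] by blast
    have "cm u w = cm (v1 [^] a \<otimes> v2 [^] b) w \<otimes> cm t w"
      unfolding abt(2) by (rule cm_mult_left[OF V TV cen cT pp tV uw(2)])
    also have "\<dots> = cm (v1 [^] a) w \<otimes> cm (v2 [^] b) w"
    proof -
      have wc: "w \<in> carrier S" using uw(2) Vsub by blast
      have "cm (v1 [^] a) w \<in> carrier S" "cm (v2 [^] b) w \<in> carrier S" using wc vc by auto
      thus ?thesis using cm_mult_left[OF V TV cen cT p1(1) p1(2) uw(2)] cm_T_left(1)[OF V cen abt(1) TV uw(2)] wc vc
        by simp
    qed
    also have "\<dots> = (c [^] b') [^] a \<otimes> (inv c [^] a') [^] b"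
      using cm_pow(1)[OF V TV cen cT v(1) uw(2)] cm_pow(1)[OF V TV cen cT v(2) uw(2)] ab' by simp
    finally have "cm u w = (c [^] b') [^] a \<otimes> (inv c [^] a') [^] b" .
    moreover have "(c [^] b') [^] a \<in> H" "(inv c [^] a') [^] b \<in> H" using Hpow cH icH by auto
    ultimately show ?thesis using subgroup.m_closed[OF H] by simp
  qed
  have DH: "derived S V \<subseteq> H"
    unfolding derived_def
  proof (rule generate_subgroup_incl[OF _ H])
    show "derived_set S V \<subseteq> H"
    proof
      fix z assume "z \<in> derived_set S V"
      then obtain h1 h2 where h: "h1 \<in> V" "h2 \<in> V" "z = h1 \<otimes> h2 \<otimes> inv h1 \<otimes> inv h2" by blast
      hence "z = cm h1 h2" unfolding cm_def by simp
      thus "z \<in> H" using cmH h by blast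
    qed
  qed
  have "v1 [^] p \<in> T"
  proof -
    have "th1 (v1 [^] p) = 0" using modhom_pow[OF h1 V v(1)] v(3) by simp
    moreover have "th2 (v1 [^] p) = 0" using modhom_pow[OF h2 V v(1)] v(4) by simp
    ultimately show ?thesis using ker[OF p1(1)] by blast
  qed
  hence "c [^] p = \<one>"
    using cm_pow(1)[OF V TV cen cT v(1) v(2), of p] cm_T_left(1)[OF V cen _ TV v(2)] unfolding c_def by simp
  hence "ord c dvd p" using pow_eq_id[OF cc] by simp
  hence "ord c \<le> p" using p2 by (simp add: dvd_imp_le)
  moreover have "card H = ord c" unfolding H_def using generate_pow_card[OF cc] by simp
  moreover have "card (derived S V) \<le> card H"
    using card_mono[OF _ DH] finite_subset[OF subgroup.subset[OF H] fin] by blast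
  ultimately show ?thesis by simp
qed

end


context VS begin

lemma cyclic: "\<exists>t\<in>T. \<forall>x\<in>T. \<exists>n::nat. x \<in> derived S V #> t [^] n"
proof (rule ccontr)
  assume nc0: "\<not> (\<exists>t\<in>T. \<forall>x\<in>T. \<exists>n::nat. x \<in> derived S V #> t [^] n)"
  define D where "D = derived S V"
  have DS: "subgroup D S" unfolding D_def using derived_is_subgroup[OF Vsub] .
  have DT: "D \<subseteq> T" unfolding D_def using derived_T .
  have DGT: "subgroup D GT" using subgroup_incl[OF DS T DT] .
  note Tab = T_abelian
  have nc: "\<forall>g\<in>carrier GT. generate GT (insert g D) \<noteq> carrier GT"
  proof (intro ballI notI)
    fix g assume g0: "g \<in> carrier GT" and eq: "generate GT (insert g D) = carrier GT"
    have g: "g \<in> T" using g0 by simp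
    have gc: "g \<in> carrier S" using g Tsub by blast
    have gpT: "g [^] (i::int) \<in> T" for i using subgroup_int_pow_closed[OF T g] .
    define U where "U = {d \<otimes> g [^] (i::int) | d i. d \<in> D}"
    have Dc: "d \<in> carrier S" "d \<in> T" if "d \<in> D" for d using that DT Tsub by auto
    have US: "subgroup U S"
    proof (rule subgroupI)
      show "U \<subseteq> carrier S" unfolding U_def using Dc gc by auto
      have "\<one> \<otimes> g [^] (0::int) \<in> U" unfolding U_def using subgroup.one_closed[OF DS] by blast
      thus "U \<noteq> {}" by blast
    next
      fix a assume "a \<in> U"
      then obtain d i where di: "d \<in> D" "a = d \<otimes> g [^] (i::int)" unfolding U_def by blast
      have idD: "inv d \<in> D" using subgroup.m_inv_closed[OF DS di(1)] .
      have "inv a = inv (g [^] i) \<otimes> inv d" using di Dc gc by (simp add: inv_mult_group)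
      also have "\<dots> = g [^] (-i) \<otimes> inv d" using gc by (simp add: int_pow_neg)
      also have "\<dots> = inv d \<otimes> g [^] (-i)" using Tab gpT Dc(2)[OF idD] by blast
      finally show "inv a \<in> U" unfolding U_def using idD by blast
    next
      fix a b assume "a \<in> U" "b \<in> U"
      then obtain d i d' j where di: "d \<in> D" "a = d \<otimes> g [^] (i::int)" and dj: "d' \<in> D" "b = d' \<otimes> g [^] (j::int)"
        unfolding U_def by blast
      have c: "d \<in> carrier S" "d' \<in> carrier S" using Dc di(1) dj(1) by auto
      have e: "g [^] i \<otimes> d' = d' \<otimes> g [^] i" using Tab gpT Dc(2)[OF dj(1)] by blast
      have "a \<otimes> b = d \<otimes> (g [^] i \<otimes> d') \<otimes> g [^] j" using di dj c gc by (simp add: m_assoc)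
      also have "\<dots> = d \<otimes> (d' \<otimes> g [^] i) \<otimes> g [^] j" using e by simp
      also have "\<dots> = (d \<otimes> d') \<otimes> g [^] (i + j)" using c gc by (simp add: m_assoc int_pow_mult)
      finally show "a \<otimes> b \<in> U" unfolding U_def using subgroup.m_closed[OF DS di(1) dj(1)] by blast
    qed
    have KU: "insert g D \<subseteq> U"
    proof
      fix z assume "z \<in> insert g D"
      thus "z \<in> U"
      proof
        assume "z = g"
        hence "z = \<one> \<otimes> g [^] (1::int)" using gc by simp
        thus ?thesis unfolding U_def using subgroup.one_closed[OF DS] by blast
      next
        assume "z \<in> D"
        hence "z = z \<otimes> g [^] (0::int)" using Dc by simp
        thus ?thesis unfolding U_def using \<open>z \<in> D\<close> by blast
      qed
    qed
    have K: "insert g D \<subseteq> T" using g DT by blast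
    have "T = generate S (insert g D)" using eq generate_consistent[OF K T] by simp
    also have "\<dots> \<subseteq> U" using generate_subgroup_incl[OF KU US] .
    finally have TU: "T \<subseteq> U" .
    obtain x where x: "x \<in> T" "\<forall>n::nat. x \<notin> D #> g [^] n" using nc0 g unfolding D_def by blast
    obtain d i where di: "d \<in> D" "x = d \<otimes> g [^] (i::int)" using TU x(1) unfolding U_def by blast
    define N where "N = int (order S)"
    define n where "n = nat (i mod N)"
    have Npos: "N > 0" unfolding N_def using ordS p2 by simp
    have nN: "int n = i mod N" unfolding n_def using Npos by simp
    have "int (ord g) dvd N" unfolding N_def using ord_dvd_group_order[OF gc] by simp
    moreover have "N dvd (int n - i)" unfolding nN using mod_eq_dvd_iff[of "i mod N" N i] by simp
    ultimately have "int (ord g) dvd (int n - i)" by (rule dvd_trans)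
    hence "g [^] i = g [^] (int n)" using int_pow_eq[OF gc] by simp
    hence "x = d \<otimes> g [^] n" using di by (simp add: int_pow_int)
    hence "x \<in> D #> g [^] n" unfolding r_coset_def using di(1) by blast
    thus False using x(2) by blast
  qed
  obtain k1 k2 a b where kk: "modhom p GT (carrier GT) k1" "modhom p GT (carrier GT) k2"
    "\<forall>h\<in>D. k1 h = 0 \<and> k2 h = 0" "a \<in> carrier GT" "b \<in> carrier GT" "k1 a = 1" "k2 a = 0" "k2 b = 1"
    using ordT group.pgroup_two_homs[OF GT finGT _ pr DGT nc] by blast
  have k1: "modhom p S T k1" and k2: "modhom p S T k2" using kk(1,2) modhom_GT by auto
  have vT: "v \<otimes> al v \<in> T" if v: "v \<in> V" for v
  proof -
    have va: "v \<otimes> al v \<in> V" using subgroup.m_closed[OF V v alV[OF v]] .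
    have "th1 (v \<otimes> al v) = 0" using modhomD(3)[OF h1 v alV[OF v]] al1[OF v] by (simp add: mod_add_right_eq)
    moreover have "th2 (v \<otimes> al v) = 0" using modhomD(3)[OF h2 v alV[OF v]] al2[OF v] by (simp add: mod_add_right_eq)
    ultimately show ?thesis using ker[OF va] by blast
  qed
  have chi: "modhom p S V (\<lambda>v. k (v \<otimes> al v))" if k: "modhom p S T k" and kD: "\<forall>d\<in>D. k d = 0" for k
    unfolding modhom_def
  proof (intro conjI ballI)
    fix v assume "v \<in> V"
    thus "0 \<le> k (v \<otimes> al v)" "k (v \<otimes> al v) < int p" using modhomD(1,2)[OF k vT] by auto
  next
    fix v w assume v: "v \<in> V" and w: "w \<in> V"
    define A where "A = al v"
    define B where "B = al w"
    define cc where "cc = cm w A"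
    have AV: "A \<in> V" "B \<in> V" unfolding A_def B_def using alV v w by auto
    have c: "v \<in> carrier S" "w \<in> carrier S" "A \<in> carrier S" "B \<in> carrier S" using v w AV Vsub by auto
    have ccT: "cc \<in> T" unfolding cc_def using cm_T w AV(1) by blast
    have ccc: "cc \<in> carrier S" using ccT Tsub by blast
    have ccD: "cc \<in> D"
    proof -
      have "cc \<in> derived_set S V" unfolding cc_def cm_def using w AV(1) by blast
      thus ?thesis unfolding D_def derived_def by (rule generate.incl)
    qed
    have i1: "cc \<otimes> (A \<otimes> w) = w \<otimes> A" unfolding cc_def cm_def using c by (simp add: m_assoc)
    have i2: "v \<otimes> cc = cc \<otimes> v" using T_central ccT v by auto
    have "v \<otimes> w \<otimes> al (v \<otimes> w) = v \<otimes> ((w \<otimes> A) \<otimes> B)" unfolding A_def B_def using alhom[OF v w] c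
      by (simp add: m_assoc A_def B_def)
    also have "\<dots> = v \<otimes> ((cc \<otimes> (A \<otimes> w)) \<otimes> B)" using i1 by simp
    also have "\<dots> = (v \<otimes> cc) \<otimes> (A \<otimes> (w \<otimes> B))" using c ccc by (simp add: m_assoc)
    also have "\<dots> = (cc \<otimes> v) \<otimes> (A \<otimes> (w \<otimes> B))" using i2 by simp
    also have "\<dots> = cc \<otimes> ((v \<otimes> A) \<otimes> (w \<otimes> B))" using c ccc by (simp add: m_assoc)
    finally have eq: "v \<otimes> w \<otimes> al (v \<otimes> w) = cc \<otimes> ((v \<otimes> al v) \<otimes> (w \<otimes> al w))" unfolding A_def B_def .
    have XT: "(v \<otimes> al v) \<otimes> (w \<otimes> al w) \<in> T" using subgroup.m_closed[OF T vT[OF v] vT[OF w]] .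
    have "k (v \<otimes> w \<otimes> al (v \<otimes> w)) = k ((v \<otimes> al v) \<otimes> (w \<otimes> al w))"
      unfolding eq using modhom_mult0[OF k ccT _ XT] kD ccD by blast
    also have "\<dots> = (k (v \<otimes> al v) + k (w \<otimes> al w)) mod int p" using modhomD(3)[OF k vT[OF v] vT[OF w]] .
    finally show "k (v \<otimes> w \<otimes> al (v \<otimes> w)) = (k (v \<otimes> al v) + k (w \<otimes> al w)) mod int p" .
  qed
  have abT: "a \<in> T" "b \<in> T" using kk(4,5) by auto
  define e where "e = (p + 1) div 2"
  have ee: "e + e = p + 1" unfolding e_def using podd by presburger
  have powT: "x [^] (n::nat) \<in> T" if "x \<in> T" for x n
  proof -
    have "x [^] (int n) \<in> T" by (rule subgroup_int_pow_closed[OF T that])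
    thus ?thesis by (simp add: int_pow_int)
  qed
  have sq: "k (x [^] e \<otimes> al (x [^] e)) = (int (p + 1) * k x) mod int p" if k: "modhom p S T k" and x: "x \<in> T" for k x
  proof -
    have xc: "x \<in> carrier S" using x Tsub by blast
    have "x [^] e \<otimes> al (x [^] e) = x [^] e \<otimes> x [^] e" using alT[OF powT[OF x]] by simp
    also have "\<dots> = x [^] (p + 1)" using xc ee by (simp add: nat_pow_mult)
    finally have eqx: "x [^] e \<otimes> al (x [^] e) = x [^] (p + 1)" .
    show ?thesis by (simp only: eqx modhom_pow[OF k T x])
  qed
  have p1: "int (p + 1) mod int p = 1" using p2 by (simp add: mod_pos_pos_trivial)
  have "k1 (a [^] e \<otimes> al (a [^] e)) = 1" using sq[OF k1 abT(1)] kk(6) p1 by simp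
  moreover have "k2 (a [^] e \<otimes> al (a [^] e)) = 0" using sq[OF k2 abT(1)] kk(7) by simp
  moreover have "k2 (b [^] e \<otimes> al (b [^] e)) = 1" using sq[OF k2 abT(2)] kk(8) p1 by simp
  moreover have "modhom p S V (\<lambda>v. k1 (v \<otimes> al v))" "modhom p S V (\<lambda>v. k2 (v \<otimes> al v))"
    using chi[OF k1] chi[OF k2] kk(3) by auto
  ultimately show False using contra4[OF _ _ powT[OF abT(1)] powT[OF abT(2)], of "\<lambda>v. k1 (v \<otimes> al v)" "\<lambda>v. k2 (v \<otimes> al v)"]
    by simp
qed

end


lemma mI_SL2:
  assumes p2: "2 \<le> p"
  shows "(int p - 1, 0, 0, int p - 1) \<in> carrier (SL2 p)"
proof -
  have "(int p - 1) * (int p - 1) = int p * (int p - 2) + 1" by (simp add: algebra_simps)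
  hence "((int p - 1) * (int p - 1) - 0 * 0) mod int p = 1" using p2 by (simp add: mod_mult_self4)
  thus ?thesis unfolding SL2_def using p2 by simp
qed

lemma neg_mod_lemma: "((int p - 1) * x) mod int p = (- x) mod int p"
proof -
  have eq: "(int p - 1) * x = - x + int p * x" by (simp add: algebra_simps)
  show ?thesis unfolding eq by (rule mod_mult_self2)
qed

lemma theorem2p9_aux:
  fixes p :: nat and S :: "('a,'b) monoid_scheme" (structure)
    and F :: "'a set \<Rightarrow> 'a set \<Rightarrow> ('a \<Rightarrow> 'a) set"
    and E1 E2 T V :: "'a set"
  assumes p: "Factorial_Ring.prime p" "odd p"
    and S: "group S" "finite (carrier S)" "\<exists>n. card (carrier S) = p ^ n"
    and sat: "saturated_fusion_system p S F"
    and E: "essential p S F E1" "essential p S F E2" "E1 \<noteq> E2"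
           "normalizerS S E1 = normalizerS S E2"
    and T: "is_core S F E1 E2 T"
    and rk: "rank S E1 \<le> 3" "rank S E2 \<le> 3" "rank S T \<le> 3"
    and SL: "(OutF S F E1)\<lparr>carrier := Opprime p (OutF S F E1)\<rparr> \<cong> SL2 p"
            "Out_centralizes (Opprime p (OutF S F E1)) T"
    and V: "subgroup V S \<and> T \<subseteq> V \<and> V \<subseteq> E1 \<and> F_characteristic F E1 V \<and>
              sectional_rank_le S V 3 \<and> V \<subseteq> centralizerS S E1 T <#>\<^bsub>S\<^esub> T \<and>
              natural_SL2_module p S (OutF S F E1) (Opprime p (OutF S F E1)) V T"
  shows "(\<forall>x\<in>T. \<forall>y\<in>T. x \<otimes>\<^bsub>S\<^esub> y = y \<otimes>\<^bsub>S\<^esub> x) \<and>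
           (\<forall>t\<in>T. \<forall>v\<in>V. t \<otimes>\<^bsub>S\<^esub> v = v \<otimes>\<^bsub>S\<^esub> t) \<and>
           card (derived S V) \<le> p \<and>
           derived S V \<subseteq> T \<and>
           (\<exists>t\<in>T. \<forall>x\<in>T. \<exists>n::nat. x \<in> derived S V #>\<^bsub>S\<^esub> (t [^]\<^bsub>S\<^esub> n))"
proof -
  interpret group S by (rule S(1))
  have fin: "finite (carrier S)" by (rule S(2))
  obtain m where ordS: "order S = p ^ m" using S(3) unfolding order_def by blast
  have p2: "2 \<le> p" using p(1) prime_ge_2_nat by blast
  have fs: "fusion_system S F" using sat unfolding saturated_fusion_system_def by blast
  have E1: "subgroup E1 S" using E(1) unfolding essential_def by blast
  have fsE: "fsE S F E1" unfolding fsE_def using S(1) fs E1 fin by blast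
  interpret X: fsE S F E1 by (rule fsE)
  have Tsg: "subgroup T S" using T unfolding is_core_def core_cond_def by blast
  have Vsg: "subgroup V S" and TV: "T \<subseteq> V" and VE: "V \<subseteq> E1" and Vch: "F_characteristic F E1 V"
    and secr: "sectional_rank_le S V 3" and VC: "V \<subseteq> centralizerS S E1 T <#> T"
    and nat: "natural_SL2_module p S (OutF S F E1) (Opprime p (OutF S F E1)) V T"
    using V by auto
  define K where "K = Opprime p (OutF S F E1)"
  obtain \<psi> \<theta> where psi: "\<psi> \<in> iso ((OutF S F E1)\<lparr>carrier := K\<rparr>) (SL2 p)"
    and thV: "\<theta> ` V = {0..<int p} \<times> {0..<int p}"
    and thh: "\<forall>v\<in>V. \<forall>w\<in>V. \<theta> (v \<otimes> w) = ((fst (\<theta> v) + fst (\<theta> w)) mod int p, (snd (\<theta> v) + snd (\<theta> w)) mod int p)"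
    and thk: "\<forall>v\<in>V. \<theta> v = (0,0) \<longleftrightarrow> v \<in> T"
    and tha: "\<forall>C\<in>K. \<forall>\<alpha>\<in>C. \<forall>v\<in>V. \<theta> (\<alpha> v) = matvec p (\<psi> C) (\<theta> v)"
    using nat unfolding natural_SL2_module_def K_def by blast
  define mI where "mI = (int p - 1, 0::int, 0::int, int p - 1)"
  have mI: "mI \<in> carrier (SL2 p)" unfolding mI_def using mI_SL2[OF p2] .
  have bij: "bij_betw \<psi> K (carrier (SL2 p))" using psi unfolding iso_def by simp
  define C0 where "C0 = inv_into K \<psi> mI"
  have C0: "C0 \<in> K" "\<psi> C0 = mI"
    unfolding C0_def using bij mI by (auto simp: bij_betw_def inv_into_into f_inv_into_f)
  obtain \<alpha> where al: "\<alpha> \<in> C0" "\<forall>t\<in>T. \<alpha> t = t"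
    using SL(2) C0(1) unfolding Out_centralizes_def K_def by blast
  have alF: "\<alpha> \<in> F E1 E1"
    using X.OutF_carrier_sub X.Opprime_sub C0(1) al(1) unfolding K_def by blast
  have alVV: "\<alpha> ` V = V" using Vch alF unfolding F_characteristic_def by blast
  define th1 where "th1 = (\<lambda>v. fst (\<theta> v))"
  define th2 where "th2 = (\<lambda>v. snd (\<theta> v))"
  have thr: "th1 v \<in> {0..<int p} \<and> th2 v \<in> {0..<int p}" if "v \<in> V" for v
  proof -
    have "\<theta> v \<in> {0..<int p} \<times> {0..<int p}" using thV that by blast
    thus ?thesis unfolding th1_def th2_def by (cases "\<theta> v") auto
  qed
  have h1: "modhom p S V th1" unfolding modhom_def using thr thh unfolding th1_def by auto
  have h2: "modhom p S V th2" unfolding modhom_def using thr thh unfolding th2_def by auto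
  have ker: "\<And>v. v \<in> V \<Longrightarrow> (th1 v = 0 \<and> th2 v = 0) \<longleftrightarrow> v \<in> T"
  proof -
    fix v assume v: "v \<in> V"
    have "(th1 v = 0 \<and> th2 v = 0) \<longleftrightarrow> \<theta> v = (0,0)" unfolding th1_def th2_def by (cases "\<theta> v") auto
    thus "(th1 v = 0 \<and> th2 v = 0) \<longleftrightarrow> v \<in> T" using thk v by blast
  qed
  have surj: "\<And>a b. a \<in> {0..<int p} \<Longrightarrow> b \<in> {0..<int p} \<Longrightarrow> \<exists>v\<in>V. th1 v = a \<and> th2 v = b"
  proof -
    fix a b assume "a \<in> {0..<int p}" "b \<in> {0..<int p}"
    hence "(a, b) \<in> \<theta> ` V" using thV by blast
    then obtain v where vV: "v \<in> V" and tv: "\<theta> v = (a, b)" by force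
    have "th1 v = a" "th2 v = b" unfolding th1_def th2_def using tv by simp_all
    thus "\<exists>v\<in>V. th1 v = a \<and> th2 v = b" using vV by blast
  qed
  have rkV: "rank S V \<le> 3" using secr Vsg unfolding sectional_rank_le_def by blast
  have Vsub: "V \<subseteq> carrier S" using subgroup.subset[OF Vsg] .
  have Tsub: "T \<subseteq> carrier S" using subgroup.subset[OF Tsg] .
  have cent: "\<And>v. v \<in> V \<Longrightarrow> \<exists>c t. t \<in> T \<and> c \<in> V \<and> (\<forall>x\<in>T. c \<otimes> x = x \<otimes> c) \<and> v = c \<otimes> t"
  proof -
    fix v assume v: "v \<in> V"
    hence "v \<in> centralizerS S E1 T <#> T" using VC by blast
    then obtain c t where ct: "c \<in> centralizerS S E1 T" "t \<in> T" "v = c \<otimes> t" unfolding set_mult_def by blast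
    have cc: "c \<in> carrier S" "t \<in> carrier S" using ct(1) X.Esub ct(2) Tsub unfolding centralizerS_def by auto
    have "c = v \<otimes> inv t" using ct(3) cc by (simp add: m_assoc)
    hence "c \<in> V" using subgroup.m_closed[OF Vsg v subgroup.m_inv_closed[OF Vsg]] ct(2) TV by blast
    moreover have "\<forall>x\<in>T. c \<otimes> x = x \<otimes> c" using ct(1) unfolding centralizerS_def by blast
    ultimately show "\<exists>c t. t \<in> T \<and> c \<in> V \<and> (\<forall>x\<in>T. c \<otimes> x = x \<otimes> c) \<and> v = c \<otimes> t" using ct by blast
  qed
  have alV: "\<And>v. v \<in> V \<Longrightarrow> \<alpha> v \<in> V" using alVV by blast
  have alhom: "\<And>x y. x \<in> V \<Longrightarrow> y \<in> V \<Longrightarrow> \<alpha> (x \<otimes> y) = \<alpha> x \<otimes> \<alpha> y"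
    using X.Fprops(4)[OF alF] VE by blast
  have alT: "\<And>t. t \<in> T \<Longrightarrow> \<alpha> t = t" using al(2) by blast
  have alth: "th1 (\<alpha> v) = (- th1 v) mod int p \<and> th2 (\<alpha> v) = (- th2 v) mod int p" if v: "v \<in> V" for v
  proof -
    have e: "\<theta> (\<alpha> v) = matvec p mI (\<theta> v)" using tha C0 al(1) v by auto
    obtain x y where xy: "\<theta> v = (x, y)" by (cases "\<theta> v") auto
    have "\<theta> (\<alpha> v) = (((int p - 1) * x) mod int p, ((int p - 1) * y) mod int p)"
      using e xy unfolding matvec_def mI_def by simp
    thus ?thesis unfolding th1_def th2_def using xy neg_mod_lemma by simp
  qed
  have al1: "\<And>v. v \<in> V \<Longrightarrow> th1 (\<alpha> v) = (- th1 v) mod int p" using alth by blast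
  have al2: "\<And>v. v \<in> V \<Longrightarrow> th2 (\<alpha> v) = (- th2 v) mod int p" using alth by blast
  have VS: "VS S p m V T th1 th2 \<alpha>"
    apply (rule VS.intro[OF S(1)])
    apply (rule VS_axioms.intro)
    by (fact fin p(1) p(2) ordS Vsg Tsg TV h1 h2 ker surj rkV cent alV alhom alT al1 al2)+
  interpret Y: VS S p m V T th1 th2 \<alpha> by (rule VS)
  show ?thesis using Y.T_abelian Y.T_central Y.card_derived Y.derived_T Y.cyclic by blast
qed

theorem theorem2p9:
  fixes p :: nat and S :: "('a,'b) monoid_scheme"
    and F :: "'a set \<Rightarrow> 'a set \<Rightarrow> ('a \<Rightarrow> 'a) set"
    and E1 E2 T V :: "'a set"
  assumes p: "Factorial_Ring.prime p" "odd p"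
    and S: "group S" "finite (carrier S)" "\<exists>n. card (carrier S) = p ^ n"
    and sat: "saturated_fusion_system p S F"
    and E: "essential p S F E1" "essential p S F E2" "E1 \<noteq> E2"
           "normalizerS S E1 = normalizerS S E2"
    and T: "is_core S F E1 E2 T"
    and rk: "rank S E1 \<le> 3" "rank S E2 \<le> 3" "rank S T \<le> 3"
    and SL: "(OutF S F E1)\<lparr>carrier := Opprime p (OutF S F E1)\<rparr> \<cong> SL2 p"
            "Out_centralizes (Opprime p (OutF S F E1)) T"
    and V: "subgroup V S \<and> T \<subseteq> V \<and> V \<subseteq> E1 \<and> F_characteristic F E1 V \<and>
              sectional_rank_le S V 3 \<and> V \<subseteq> centralizerS S E1 T <#>\<^bsub>S\<^esub> T \<and>
              natural_SL2_module p S (OutF S F E1) (Opprime p (OutF S F E1)) V T"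
  shows "(\<forall>x\<in>T. \<forall>y\<in>T. x \<otimes>\<^bsub>S\<^esub> y = y \<otimes>\<^bsub>S\<^esub> x) \<and>
           (\<forall>t\<in>T. \<forall>v\<in>V. t \<otimes>\<^bsub>S\<^esub> v = v \<otimes>\<^bsub>S\<^esub> t) \<and>
           card (derived S V) \<le> p \<and>
           derived S V \<subseteq> T \<and>
           (\<exists>t\<in>T. \<forall>x\<in>T. \<exists>n::nat. x \<in> derived S V #>\<^bsub>S\<^esub> (t [^]\<^bsub>S\<^esub> n))"
  using theorem2p9_aux[OF p S sat E T rk SL V] .


end
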